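(* Let $\varphi:\mathbb{R}\to\mathbb{R}$ be smooth and let $\Sigma$ be a properly immersed $[\varphi,\vec e_3]$-minimal surface in $\mathbb{R}^3$. Suppose there are a constant $B>0$ and a smooth function $\mathcal{G}:[0,+\infty)\to\mathbb{R}$ with $\mathcal{G}(0)>0$, $\mathcal{G}'\ge 0$, $\mathcal{G}^{-1/2}\notin L^1([0,+\infty))$ and $\limsup_{t\to+\infty} t\mathcal{G}(\sqrt t)/\mathcal{G}(t)<+\infty$, such that $|\dot\varphi(\mu(p))|\le B\sqrt{\mathcal{G}(|p|)}$ for all $p\in\Sigma$ outside a compact set. Then the Omori–Yau maximum principle for $\Delta^{\varphi}$ holds on $\Sigma$; in particular $\Sigma$ is $\varphi$-stochastically complete.
   Context: Surfaces are connected, orientable, immersed in $\mathbb{R}^3$, without boundary, with unit normal $N$; $\mu(p)=\langle p,\vec e_3\rangle$, $\eta=\langle N,\vec e_3\rangle$. $\Sigma$ is $[\varphi,\vec e_3]$-minimal if its mean curvature vector $\vec H$ (trace of the second fundamental form) satisfies $\vec H=\dot\varphi(\mu)\eta N$. $\Delta^{\varphi}u=\Delta u+\langle\nabla(\varphi\circ\mu),\nabla u\rangle$ on $\Sigma$ (induced metric). The Omori–Yau maximum principle for $\Delta^\varphi$ holds on $\Sigma$ if for every $u\in C^2(\Sigma)$ with $u^*=\sup_\Sigma u<+\infty$ there is a sequence $p_n$ with $u(p_n)>u^*-1/n$, $|\nabla u(p_n)|<1/n$ and $\Delta^\varphi u(p_n)<1/n$ for all $n$. $\Sigma$ is $\varphi$-stochastically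 complete if the same holds without the gradient condition. *)

theory Defs
  imports "HOL-Analysis.Analysis" "HOL-Analysis.Cross3" "HOL-Library.Liminf_Limsup"
begin

type_synonym R2 = "real \<times> real"

definition pd1 :: "(R2 \<Rightarrow> 'b::real_normed_vector) \<Rightarrow> R2 \<Rightarrow> 'b" where
  "pd1 f z = vector_derivative (\<lambda>t. f (t, snd z)) (at (fst z))"

definition pd2 :: "(R2 \<Rightarrow> 'b::real_normed_vector) \<Rightarrow> R2 \<Rightarrow> 'b" where
  "pd2 f z = vector_derivative (\<lambda>t. f (fst z, t)) (at (snd z))"

fun Ck :: "nat \<Rightarrow> R2 set \<Rightarrow> (R2 \<Rightarrow> 'b::real_normed_vector) \<Rightarrow> bool" where
  "Ck 0 U f = continuous_on U f"
| "Ck (Suc k) U f =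
     (continuous_on U f \<and>
      (\<forall>z\<in>U. (\<lambda>t. f (t, snd z)) differentiable (at (fst z)) \<and>
             (\<lambda>t. f (fst z, t)) differentiable (at (snd z))) \<and>
      Ck k U (pd1 f) \<and> Ck k U (pd2 f))"

definition Cinf :: "R2 set \<Rightarrow> (R2 \<Rightarrow> 'b::real_normed_vector) \<Rightarrow> bool" where
  "Cinf U f \<longleftrightarrow> (\<forall>k. Ck k U f)"

definition g11 :: "(R2 \<Rightarrow> real^3) \<Rightarrow> R2 \<Rightarrow> real" where
  "g11 X z = pd1 X z \<bullet> pd1 X z"
definition g12 :: "(R2 \<Rightarrow> real^3) \<Rightarrow> R2 \<Rightarrow> real" where
  "g12 X z = pd1 X z \<bullet> pd2 X z"
definition g22 :: "(R2 \<Rightarrow> real^3) \<Rightarrow> R2 \<Rightarrow> real" where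
  "g22 X z = pd2 X z \<bullet> pd2 X z"
definition gdet :: "(R2 \<Rightarrow> real^3) \<Rightarrow> R2 \<Rightarrow> real" where
  "gdet X z = g11 X z * g22 X z - (g12 X z)\<^sup>2"

definition ginv11 :: "(R2 \<Rightarrow> real^3) \<Rightarrow> R2 \<Rightarrow> real" where
  "ginv11 X z = g22 X z / gdet X z"
definition ginv12 :: "(R2 \<Rightarrow> real^3) \<Rightarrow> R2 \<Rightarrow> real" where
  "ginv12 X z = - g12 X z / gdet X z"
definition ginv22 :: "(R2 \<Rightarrow> real^3) \<Rightarrow> R2 \<Rightarrow> real" where
  "ginv22 X z = g11 X z / gdet X z"

definition grad_inner_loc :: "(R2 \<Rightarrow> real^3) \<Rightarrow> (R2 \<Rightarrow> real) \<Rightarrow> (R2 \<Rightarrow> real) \<Rightarrow> R2 \<Rightarrow> real" where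
  "grad_inner_loc X a b z =
     ginv11 X z * pd1 a z * pd1 b z
   + ginv12 X z * (pd1 a z * pd2 b z + pd2 a z * pd1 b z)
   + ginv22 X z * pd2 a z * pd2 b z"

definition lap_loc :: "(R2 \<Rightarrow> real^3) \<Rightarrow> (R2 \<Rightarrow> real) \<Rightarrow> R2 \<Rightarrow> real" where
  "lap_loc X f z =
     (1 / sqrt (gdet X z)) *
     ( pd1 (\<lambda>w. sqrt (gdet X w) * (ginv11 X w * pd1 f w + ginv12 X w * pd2 f w)) z
     + pd2 (\<lambda>w. sqrt (gdet X w) * (ginv12 X w * pd1 f w + ginv22 X w * pd2 f w)) z)"

definition normal_loc :: "(R2 \<Rightarrow> real^3) \<Rightarrow> R2 \<Rightarrow> real^3" where
  "normal_loc X z = (1 / norm (cross3 (pd1 X z) (pd2 X z))) *\<^sub>R cross3 (pd1 X z) (pd2 X z)"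

definition meancurv_loc :: "(R2 \<Rightarrow> real^3) \<Rightarrow> R2 \<Rightarrow> real^3" where
  "meancurv_loc X z =
     (ginv11 X z * (pd1 (pd1 X) z \<bullet> normal_loc X z)
    + ginv12 X z * (pd2 (pd1 X) z \<bullet> normal_loc X z)
    + ginv12 X z * (pd1 (pd2 X) z \<bullet> normal_loc X z)
    + ginv22 X z * (pd2 (pd2 X) z \<bullet> normal_loc X z)) *\<^sub>R normal_loc X z"

text \<open>A surface is the type 'a (Hausdorff, second countable), with an atlas A of
 charts (psi, U): U open in R^2, psi a homeomorphism of U onto an open subset of the
 surface, the charts covering the surface; F : 'a \<Rightarrow> R^3 is an immersion, i.e.
 F \<circ> psi is a smooth map of rank 2 on U (this also makes the atlas smooth).
 Orientation / unit normal: the normals computed in overlapping charts agree.\<close>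

definition oriented_immersed_surface ::
  "('a::{t2_space,second_countable_topology} \<Rightarrow> real^3) \<Rightarrow> ((R2 \<Rightarrow> 'a) \<times> R2 set) set \<Rightarrow> bool" where
  "oriented_immersed_surface F A \<longleftrightarrow>
     (\<forall>(\<psi>, U)\<in>A. open U \<and> open (\<psi> ` U) \<and> (\<exists>\<psi>'. homeomorphism U (\<psi> ` U) \<psi> \<psi>') \<and>
        Cinf U (F \<circ> \<psi>) \<and> (\<forall>z\<in>U. cross3 (pd1 (F \<circ> \<psi>) z) (pd2 (F \<circ> \<psi>) z) \<noteq> 0)) \<and>
     (\<forall>p. \<exists>(\<psi>, U)\<in>A. p \<in> \<psi> ` U) \<and>
     (\<forall>(\<psi>1, U1)\<in>A. \<forall>(\<psi>2, U2)\<in>A. \<forall>p \<in> \<psi>1 ` U1 \<inter> \<psi>2 ` U2.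
        normal_loc (F \<circ> \<psi>1) (inv_into U1 \<psi>1 p) = normal_loc (F \<circ> \<psi>2) (inv_into U2 \<psi>2 p))"

definition chart_at :: "((R2 \<Rightarrow> 'a) \<times> R2 set) set \<Rightarrow> 'a \<Rightarrow> (R2 \<Rightarrow> 'a) \<times> R2 set" where
  "chart_at A p = (SOME c. c \<in> A \<and> p \<in> fst c ` snd c)"

definition coord_at :: "((R2 \<Rightarrow> 'a) \<times> R2 set) set \<Rightarrow> 'a \<Rightarrow> R2" where
  "coord_at A p = inv_into (snd (chart_at A p)) (fst (chart_at A p)) p"

text \<open>Global quantities, computed in a chart around p (they are chart independent).\<close>

definition unit_normal :: "('a \<Rightarrow> real^3) \<Rightarrow> ((R2 \<Rightarrow> 'a) \<times> R2 set) set \<Rightarrow> 'a \<Rightarrow> real^3" where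
  "unit_normal F A p = normal_loc (F \<circ> fst (chart_at A p)) (coord_at A p)"

definition mean_curvature_vector :: "('a \<Rightarrow> real^3) \<Rightarrow> ((R2 \<Rightarrow> 'a) \<times> R2 set) set \<Rightarrow> 'a \<Rightarrow> real^3" where
  "mean_curvature_vector F A p = meancurv_loc (F \<circ> fst (chart_at A p)) (coord_at A p)"

definition grad_inner :: "('a \<Rightarrow> real^3) \<Rightarrow> ((R2 \<Rightarrow> 'a) \<times> R2 set) set \<Rightarrow> ('a \<Rightarrow> real) \<Rightarrow> ('a \<Rightarrow> real) \<Rightarrow> 'a \<Rightarrow> real" where
  "grad_inner F A u v p =
     grad_inner_loc (F \<circ> fst (chart_at A p)) (u \<circ> fst (chart_at A p)) (v \<circ> fst (chart_at A p)) (coord_at A p)"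

definition grad_norm :: "('a \<Rightarrow> real^3) \<Rightarrow> ((R2 \<Rightarrow> 'a) \<times> R2 set) set \<Rightarrow> ('a \<Rightarrow> real) \<Rightarrow> 'a \<Rightarrow> real" where
  "grad_norm F A u p = sqrt (grad_inner F A u u p)"

definition laplacian :: "('a \<Rightarrow> real^3) \<Rightarrow> ((R2 \<Rightarrow> 'a) \<times> R2 set) set \<Rightarrow> ('a \<Rightarrow> real) \<Rightarrow> 'a \<Rightarrow> real" where
  "laplacian F A u p = lap_loc (F \<circ> fst (chart_at A p)) (u \<circ> fst (chart_at A p)) (coord_at A p)"

definition e3 :: "real^3" where "e3 = axis 3 1"

definition height :: "('a \<Rightarrow> real^3) \<Rightarrow> 'a \<Rightarrow> real" where
  "height F p = F p \<bullet> e3"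

definition phi_laplacian :: "(real \<Rightarrow> real) \<Rightarrow> ('a \<Rightarrow> real^3) \<Rightarrow> ((R2 \<Rightarrow> 'a) \<times> R2 set) set \<Rightarrow> ('a \<Rightarrow> real) \<Rightarrow> 'a \<Rightarrow> real" where
  "phi_laplacian \<phi> F A u p = laplacian F A u p + grad_inner F A (\<phi> \<circ> height F) u p"

definition C2_surface :: "((R2 \<Rightarrow> 'a) \<times> R2 set) set \<Rightarrow> ('a \<Rightarrow> real) \<Rightarrow> bool" where
  "C2_surface A u \<longleftrightarrow> (\<forall>(\<psi>, U)\<in>A. Ck 2 U (u \<circ> \<psi>))"

definition phi_minimal :: "(real \<Rightarrow> real) \<Rightarrow> ('a \<Rightarrow> real^3) \<Rightarrow> ((R2 \<Rightarrow> 'a) \<times> R2 set) set \<Rightarrow> bool" where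
  "phi_minimal \<phi> F A \<longleftrightarrow>
     (\<forall>p. mean_curvature_vector F A p =
          (deriv \<phi> (height F p) * (unit_normal F A p \<bullet> e3)) *\<^sub>R unit_normal F A p)"

definition omori_yau_phi :: "(real \<Rightarrow> real) \<Rightarrow> ('a \<Rightarrow> real^3) \<Rightarrow> ((R2 \<Rightarrow> 'a) \<times> R2 set) set \<Rightarrow> bool" where
  "omori_yau_phi \<phi> F A \<longleftrightarrow>
     (\<forall>u. C2_surface A u \<and> bdd_above (range u) \<longrightarrow>
        (\<exists>p :: nat \<Rightarrow> 'a. \<forall>n::nat. n \<ge> 1 \<longrightarrow>
            u (p n) > (SUP q. u q) - 1 / real n \<and>
            grad_norm F A u (p n) < 1 / real n \<and>
            phi_laplacian \<phi> F A u (p n) < 1 / real n))"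

definition phi_stochastically_complete :: "(real \<Rightarrow> real) \<Rightarrow> ('a \<Rightarrow> real^3) \<Rightarrow> ((R2 \<Rightarrow> 'a) \<times> R2 set) set \<Rightarrow> bool" where
  "phi_stochastically_complete \<phi> F A \<longleftrightarrow>
     (\<forall>u. C2_surface A u \<and> bdd_above (range u) \<longrightarrow>
        (\<exists>p :: nat \<Rightarrow> 'a. \<forall>n::nat. n \<ge> 1 \<longrightarrow>
            u (p n) > (SUP q. u q) - 1 / real n \<and>
            phi_laplacian \<phi> F A u (p n) < 1 / real n))"

definition smooth_real :: "(real \<Rightarrow> real) \<Rightarrow> bool" where
  "smooth_real f \<longleftrightarrow> (\<forall>n x. ((deriv ^^ n) f) differentiable (at x))"

text \<open>Smooth on [0,\<infinity>): derivatives of all orders exist (one-sided at 0); D k is the k-th derivative.\<close>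
definition smooth_on_halfline :: "(real \<Rightarrow> real) \<Rightarrow> (nat \<Rightarrow> real \<Rightarrow> real) \<Rightarrow> bool" where
  "smooth_on_halfline f D \<longleftrightarrow>
     (\<forall>t\<ge>0. D 0 t = f t) \<and>
     (\<forall>k. \<forall>t\<ge>0. (D k has_real_derivative D (Suc k) t) (at t within {0..}))"

end

theory Submission
  imports Defs
begin

lemma repr3:
  fixes a b v :: "real^3"
  defines "n \<equiv> cross3 a b"
  shows "((a\<bullet>a)*(b\<bullet>b) - (a\<bullet>b)^2) *\<^sub>R v =
     (v\<bullet>a) *\<^sub>R ((b\<bullet>b) *\<^sub>R a - (a\<bullet>b) *\<^sub>R b) + (v\<bullet>b) *\<^sub>R ((a\<bullet>a) *\<^sub>R b - (a\<bullet>b) *\<^sub>R a)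
     + (v\<bullet>n) *\<^sub>R n"
  unfolding n_def
  by (simp add: cross3_def inner_vec_def sum_3 vector_def vec_eq_iff forall_3 power2_eq_square) algebra

lemma nn_gdet: fixes a b :: "real^3" shows "cross3 a b \<bullet> cross3 a b = (a\<bullet>a)*(b\<bullet>b) - (a\<bullet>b)^2"
  by (simp add: dot_cross power2_eq_square inner_commute)

definition LAPV :: "real^3 \<Rightarrow> real^3 \<Rightarrow> real^3 \<Rightarrow> real^3 \<Rightarrow> real^3 \<Rightarrow> real^3 \<Rightarrow>
   real \<Rightarrow> real \<Rightarrow> real \<Rightarrow> real \<Rightarrow> real \<Rightarrow> real \<Rightarrow> real" where
 "LAPV a b a1 b1 a2 b2 p q p1 q1 p2 q2 =
   ((2*(b\<bullet>b1)*p + (b\<bullet>b)*p1 - (a1\<bullet>b + a\<bullet>b1)*q - (a\<bullet>b)*q1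
     + 2*(a\<bullet>a2)*q + (a\<bullet>a)*q2 - (a2\<bullet>b + a\<bullet>b2)*p - (a\<bullet>b)*p2) / ((a\<bullet>a)*(b\<bullet>b) - (a\<bullet>b)^2)
   - (((b\<bullet>b)*p - (a\<bullet>b)*q) * (2*(a\<bullet>a1)*(b\<bullet>b) + (a\<bullet>a)*(2*(b\<bullet>b1)) - 2*(a\<bullet>b)*(a1\<bullet>b + a\<bullet>b1))
     + ((a\<bullet>a)*q - (a\<bullet>b)*p) * (2*(a\<bullet>a2)*(b\<bullet>b) + (a\<bullet>a)*(2*(b\<bullet>b2)) - 2*(a\<bullet>b)*(a2\<bullet>b + a\<bullet>b2)))
     / (2*((a\<bullet>a)*(b\<bullet>b) - (a\<bullet>b)^2)^2))"

definition LA :: "real^3 \<Rightarrow> real^3 \<Rightarrow> real^3 \<Rightarrow> real^3 \<Rightarrow> real^3 \<Rightarrow> real^3 \<Rightarrow> real" where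
 "LA a b a1 b1 a2 b2 = LAPV a b a1 b1 a2 b2 1 0 0 0 0 0"
definition LB :: "real^3 \<Rightarrow> real^3 \<Rightarrow> real^3 \<Rightarrow> real^3 \<Rightarrow> real^3 \<Rightarrow> real^3 \<Rightarrow> real" where
 "LB a b a1 b1 a2 b2 = LAPV a b a1 b1 a2 b2 0 1 0 0 0 0"

lemma LAPV_split:
  "LAPV a b a1 b1 a2 b2 p q p1 q1 p2 q2 =
    ((b\<bullet>b)*p1 - (a\<bullet>b)*(q1+p2) + (a\<bullet>a)*q2) / ((a\<bullet>a)*(b\<bullet>b) - (a\<bullet>b)^2)
    + LA a b a1 b1 a2 b2 * p + LB a b a1 b1 a2 b2 * q"
  unfolding LA_def LB_def LAPV_def
  by (simp add: add_divide_distrib diff_divide_distrib algebra_simps)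

definition Tv :: "real^3 \<Rightarrow> real^3 \<Rightarrow> real^3 \<Rightarrow> real^3 \<Rightarrow> real^3 \<Rightarrow> real^3 \<Rightarrow> real^3" where
 "Tv a b a1 b1 a2 b2 =
   (1 / ((a\<bullet>a)*(b\<bullet>b) - (a\<bullet>b)^2)) *\<^sub>R
   ((2*(b\<bullet>b1)) *\<^sub>R a + (b\<bullet>b) *\<^sub>R a1 - (a1\<bullet>b + a\<bullet>b1) *\<^sub>R b - (a\<bullet>b) *\<^sub>R b1
     + (2*(a\<bullet>a2)) *\<^sub>R b + (a\<bullet>a) *\<^sub>R b2 - (a2\<bullet>b + a\<bullet>b2) *\<^sub>R a - (a\<bullet>b) *\<^sub>R a2)
   - (1 / (2*((a\<bullet>a)*(b\<bullet>b) - (a\<bullet>b)^2)^2)) *\<^sub>R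
   ((2*(a\<bullet>a1)*(b\<bullet>b) + (a\<bullet>a)*(2*(b\<bullet>b1)) - 2*(a\<bullet>b)*(a1\<bullet>b + a\<bullet>b1)) *\<^sub>R ((b\<bullet>b) *\<^sub>R a - (a\<bullet>b) *\<^sub>R b)
     + (2*(a\<bullet>a2)*(b\<bullet>b) + (a\<bullet>a)*(2*(b\<bullet>b2)) - 2*(a\<bullet>b)*(a2\<bullet>b + a\<bullet>b2)) *\<^sub>R ((a\<bullet>a) *\<^sub>R b - (a\<bullet>b) *\<^sub>R a))"

lemma LAPV_inner:
  "LAPV a b a1 b1 a2 b2 (v\<bullet>a) (v\<bullet>b) (v\<bullet>a1) (v\<bullet>b1) (v\<bullet>a2) (v\<bullet>b2) = v \<bullet> Tv a b a1 b1 a2 b2"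
  unfolding LAPV_def Tv_def
  by (simp add: inner_add_right inner_diff_right algebra_simps add_divide_distrib diff_divide_distrib)

lemma div_helper: fixes D x y :: real shows "D \<noteq> 0 \<Longrightarrow> 2*D*x = y \<Longrightarrow> (1/D)*x - (1/(2*D^2))*y = 0"
  by (simp add: field_simps power2_eq_square)

lemma Tv_a:
  assumes "cross3 a b \<noteq> 0"
  shows "Tv a b a1 b1 b1 b2 \<bullet> a = 0"
proof -
  have D: "(a\<bullet>a)*(b\<bullet>b) - (a\<bullet>b)^2 \<noteq> 0" using assms nn_gdet[of a b] by auto
  show ?thesis unfolding Tv_def inner_diff_left[of _ _ a] inner_scaleR_left
    apply (rule div_helper[OF D])
    apply (simp only: inner_add_left inner_diff_left inner_scaleR_left)
    apply (simp only: inner_commute[of b a] inner_commute[of a1 a] inner_commute[of b1 a] inner_commute[of b2 a] inner_commute[of b1 b])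
    apply (simp add: power2_eq_square)
    apply algebra
    done
qed

lemma Tv_b:
  assumes "cross3 a b \<noteq> 0"
  shows "Tv a b a1 b1 b1 b2 \<bullet> b = 0"
proof -
  have D: "(a\<bullet>a)*(b\<bullet>b) - (a\<bullet>b)^2 \<noteq> 0" using assms nn_gdet[of a b] by auto
  show ?thesis unfolding Tv_def inner_diff_left[of _ _ b] inner_scaleR_left
    apply (rule div_helper[OF D])
    apply (simp only: inner_add_left inner_diff_left inner_scaleR_left)
    apply (simp only: inner_commute[of b a] inner_commute[of b1 b] inner_commute[of b2 b])
    apply (simp add: power2_eq_square)
    apply algebra
    done
qed

lemma Tv_n:
  assumes "cross3 a b \<noteq> 0"
  shows "Tv a b a1 b1 b1 b2 \<bullet> cross3 a b =
    ((b\<bullet>b)*(a1 \<bullet> cross3 a b) - 2*(a\<bullet>b)*(b1 \<bullet> cross3 a b) + (a\<bullet>a)*(b2 \<bullet> cross3 a b))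
     / ((a\<bullet>a)*(b\<bullet>b) - (a\<bullet>b)^2)"
  unfolding Tv_def inner_diff_left[of _ _ "cross3 a b"] inner_scaleR_left
  apply (simp only: inner_add_left inner_diff_left inner_scaleR_left dot_cross_self)
  apply (simp add: field_simps)
  done

lemma Tv_mc:
  assumes nz: "cross3 a b \<noteq> 0"
  defines "N \<equiv> (1 / norm (cross3 a b)) *\<^sub>R cross3 a b"
  defines "D \<equiv> (a\<bullet>a)*(b\<bullet>b) - (a\<bullet>b)^2"
  shows "Tv a b a1 b1 b1 b2 =
     ((b\<bullet>b)/D * (a1 \<bullet> N) + (- (a\<bullet>b))/D * (b1 \<bullet> N) + (- (a\<bullet>b))/D * (b1 \<bullet> N) + (a\<bullet>a)/D * (b2 \<bullet> N)) *\<^sub>R N"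
proof -
  let ?n = "cross3 a b"
  have nn: "?n \<bullet> ?n = D" unfolding D_def by (rule nn_gdet)
  have Dpos: "D > 0" using nz nn by (metis inner_gt_zero_iff)
  have nrm: "norm ?n ^2 = D" using nn by (simp add: power2_norm_eq_inner)
  have nrm0: "norm ?n > 0" using nz by simp
  have nrm2: "\<And>x. norm ?n * (norm ?n * x) = D * x" using nrm by (simp add: power2_eq_square mult.assoc[symmetric])
  have r: "D *\<^sub>R Tv a b a1 b1 b1 b2 = (Tv a b a1 b1 b1 b2 \<bullet> ?n) *\<^sub>R ?n"
    using repr3[of a b "Tv a b a1 b1 b1 b2"] Tv_a[OF nz] Tv_b[OF nz] unfolding D_def by simp
  hence "Tv a b a1 b1 b1 b2 = ((Tv a b a1 b1 b1 b2 \<bullet> ?n) / D) *\<^sub>R ?n"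
  proof -
    have "Tv a b a1 b1 b1 b2 = (1/D) *\<^sub>R (D *\<^sub>R Tv a b a1 b1 b1 b2)" using Dpos by simp
    also have "\<dots> = ((Tv a b a1 b1 b1 b2 \<bullet> ?n) / D) *\<^sub>R ?n" unfolding r by simp
    finally show ?thesis .
  qed
  also have "\<dots> = (((b\<bullet>b)*(a1 \<bullet> ?n) - 2*(a\<bullet>b)*(b1 \<bullet> ?n) + (a\<bullet>a)*(b2 \<bullet> ?n)) / (D*D)) *\<^sub>R ?n"
    using Tv_n[OF nz] unfolding D_def by simp
  also have "\<dots> = ((b\<bullet>b)/D * (a1 \<bullet> N) + (- (a\<bullet>b))/D * (b1 \<bullet> N) + (- (a\<bullet>b))/D * (b1 \<bullet> N) + (a\<bullet>a)/D * (b2 \<bullet> N)) *\<^sub>R N"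
    unfolding N_def using nrm nrm0 Dpos
    apply (simp add: inner_scaleR_right field_simps power2_eq_square)
    apply (simp add: nrm2 algebra_simps)
    done
  finally show ?thesis .
qed


lemma tang:
  fixes a b v w :: "real^3"
  shows "((a\<bullet>a)*(b\<bullet>b) - (a\<bullet>b)^2) * (v\<bullet>w) =
    (v\<bullet>a)*((b\<bullet>b)*(a\<bullet>w) - (a\<bullet>b)*(b\<bullet>w)) + (v\<bullet>b)*((a\<bullet>a)*(b\<bullet>w) - (a\<bullet>b)*(a\<bullet>w))
    + (v\<bullet>cross3 a b)*(cross3 a b\<bullet>w)"
proof -
  have "(((a\<bullet>a)*(b\<bullet>b) - (a\<bullet>b)^2) *\<^sub>R v) \<bullet> w =
     ((v\<bullet>a) *\<^sub>R ((b\<bullet>b) *\<^sub>R a - (a\<bullet>b) *\<^sub>R b) + (v\<bullet>b) *\<^sub>R ((a\<bullet>a) *\<^sub>R b - (a\<bullet>b) *\<^sub>R a)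
     + (v\<bullet>cross3 a b) *\<^sub>R cross3 a b) \<bullet> w" by (subst repr3) simp
  thus ?thesis by (simp only: inner_add_left inner_diff_left inner_scaleR_left)
qed

lemma inner_hvd:
  fixes A B :: "real \<Rightarrow> real^3"
  assumes "(A has_vector_derivative A') (at t0)" "(B has_vector_derivative B') (at t0)"
  shows "((\<lambda>t. A t \<bullet> B t) has_real_derivative (A' \<bullet> B t0 + A t0 \<bullet> B')) (at t0)"
proof -
  have "((\<lambda>t. A t \<bullet> B t) has_derivative (\<lambda>h. A t0 \<bullet> (h *\<^sub>R B') + (h *\<^sub>R A') \<bullet> B t0)) (at t0)"
    using assms unfolding has_vector_derivative_def by (intro derivative_eq_intros) auto
  thus ?thesis unfolding has_field_derivative_def
    by (rule has_derivative_eq_rhs) (auto simp: algebra_simps inner_commute)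
qed

lemma DERIV_mult2:
  "(f has_real_derivative Da) (at x) \<Longrightarrow> (g has_real_derivative Db) (at x) \<Longrightarrow>
   ((\<lambda>x. f x * g x) has_real_derivative Da * g x + f x * Db) (at x)"
  using DERIV_mult'[of f Da x UNIV g Db] by (simp add: algebra_simps)

lemma quot_deriv:
  fixes U V W P Q :: "real \<Rightarrow> real"
  assumes "(U has_real_derivative U') (at t0)" "(V has_real_derivative V') (at t0)"
    "(W has_real_derivative W') (at t0)" "(P has_real_derivative P') (at t0)"
    "(Q has_real_derivative Q') (at t0)" "W t0 > 0"
  shows "((\<lambda>t. (U t * P t - V t * Q t) / sqrt (W t)) has_real_derivative
     ((U' * P t0 + U t0 * P' - V' * Q t0 - V t0 * Q') / sqrt (W t0)
      - (U t0 * P t0 - V t0 * Q t0) * W' / (2 * W t0 * sqrt (W t0)))) (at t0)"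
proof -
  have s: "sqrt (W t0) > 0" using assms(6) by simp
  have ss2: "\<And>x. sqrt (W t0) * (sqrt (W t0) * x) = W t0 * x"
    using assms(6) by (simp add: mult.assoc[symmetric])
  have "((\<lambda>t. (U t * P t - V t * Q t) / sqrt (W t)) has_real_derivative
     ((U' * P t0 + U t0 * P' - (V' * Q t0 + V t0 * Q')) * sqrt (W t0)
      - (U t0 * P t0 - V t0 * Q t0) * (inverse (sqrt (W t0)) / 2 * W')) / (sqrt (W t0) * sqrt (W t0))) (at t0)"
    using assms s
    by (intro DERIV_divide DERIV_diff DERIV_mult2 DERIV_add DERIV_chain2[OF DERIV_real_sqrt]) auto
  moreover have "((U' * P t0 + U t0 * P' - (V' * Q t0 + V t0 * Q')) * sqrt (W t0)
      - (U t0 * P t0 - V t0 * Q t0) * (inverse (sqrt (W t0)) / 2 * W')) / (sqrt (W t0) * sqrt (W t0))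
    = ((U' * P t0 + U t0 * P' - V' * Q t0 - V t0 * Q') / sqrt (W t0)
      - (U t0 * P t0 - V t0 * Q t0) * W' / (2 * W t0 * sqrt (W t0)))"
    using s assms(6) by (simp add: field_simps) (simp add: ss2)
  ultimately show ?thesis by simp
qed


definition qd :: "real \<Rightarrow> real \<Rightarrow> real \<Rightarrow> real \<Rightarrow> real \<Rightarrow> real \<Rightarrow> real \<Rightarrow> real \<Rightarrow> real \<Rightarrow> real \<Rightarrow> real" where
  "qd U' P U P' V' Q V Q' W W' = (U'*P + U*P' - V'*Q - V*Q')/sqrt W - (U*P - V*Q)*W'/(2*W* sqrt W)"

lemma final_alg:
  fixes aa ab bb aa1 a1b ab1 bb1 aa2 a2b ab2 bb2 p q p1 q1 p2 q2 :: real
  assumes "D = aa*bb - ab^2" "D > 0"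
  shows "(1/sqrt D) * (qd (bb1+bb1) p bb p1 (a1b+ab1) q ab q1 D ((aa1+aa1)*bb + aa*(bb1+bb1) - 2*ab*(a1b+ab1))
          + qd (aa2+aa2) q aa q2 (a2b+ab2) p ab p2 D ((aa2+aa2)*bb + aa*(bb2+bb2) - 2*ab*(a2b+ab2)))
    = ((2*bb1*p + bb*p1 - (a1b + ab1)*q - ab*q1
     + 2*aa2*q + aa*q2 - (a2b + ab2)*p - ab*p2) / (aa*bb - ab^2)
   - ((bb*p - ab*q) * (2*aa1*bb + aa*(2*bb1) - 2*ab*(a1b + ab1))
     + (aa*q - ab*p) * (2*aa2*bb + aa*(2*bb2) - 2*ab*(a2b + ab2)))
     / (2*(aa*bb - ab^2)^2))"
proof -
  have s: "sqrt D > 0" using assms by simp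
  have ss2: "\<And>x. sqrt D * (sqrt D * x) = D * x" using assms(2) by (simp add: mult.assoc[symmetric])
  show ?thesis unfolding qd_def assms(1)[symmetric] using s assms(2)
    by (simp add: field_simps power2_eq_square) (simp add: ss2 algebra_simps)
qed

lemma gdet_deriv:
  fixes A B :: "real \<Rightarrow> real^3"
  assumes "(A has_vector_derivative A') (at t0)" "(B has_vector_derivative B') (at t0)"
  shows "((\<lambda>t. (A t\<bullet>A t)*(B t\<bullet>B t) - (A t\<bullet>B t)^2) has_real_derivative
     ((A'\<bullet>A t0 + A t0\<bullet>A')*(B t0\<bullet>B t0) + (A t0\<bullet>A t0)*(B'\<bullet>B t0 + B t0\<bullet>B') - 2*(A t0\<bullet>B t0)*(A'\<bullet>B t0 + A t0\<bullet>B'))) (at t0)"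
proof -
  have "((\<lambda>t. (A t\<bullet>A t)*(B t\<bullet>B t) - (A t\<bullet>B t)*(A t\<bullet>B t)) has_real_derivative
     ((A'\<bullet>A t0 + A t0\<bullet>A')*(B t0\<bullet>B t0) + (A t0\<bullet>A t0)*(B'\<bullet>B t0 + B t0\<bullet>B') -
      ((A'\<bullet>B t0 + A t0\<bullet>B')*(A t0\<bullet>B t0) + (A t0\<bullet>B t0)*(A'\<bullet>B t0 + A t0\<bullet>B')))) (at t0)"
    by (intro DERIV_diff DERIV_mult2 inner_hvd assms)
  thus ?thesis by (simp add: power2_eq_square algebra_simps)
qed

lemma gdet_nonneg: "gdet X w \<ge> 0"
  unfolding gdet_def g11_def g22_def g12_def using nn_gdet[of "pd1 X w" "pd2 X w"]
  by (metis inner_ge_zero)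

lemma sqrt_frac: fixes D G :: real assumes "D \<ge> 0" shows "sqrt D * (G / D) = G / sqrt D"
proof (cases "D = 0")
  case False
  hence "D = sqrt D * sqrt D" using assms by simp
  thus ?thesis using False by (metis (no_types, opaque_lifting) divide_divide_eq_right nonzero_mult_div_cancel_left real_sqrt_eq_zero_cancel_iff times_divide_eq_right)
qed simp

lemma lap_fun1:
  "(\<lambda>w. sqrt (gdet X w) * (ginv11 X w * pd1 f w + ginv12 X w * pd2 f w)) =
   (\<lambda>w. (g22 X w * pd1 f w - g12 X w * pd2 f w) / sqrt (gdet X w))"
proof
  fix w
  have "sqrt (gdet X w) * (ginv11 X w * pd1 f w + ginv12 X w * pd2 f w) =
        sqrt (gdet X w) * ((g22 X w * pd1 f w - g12 X w * pd2 f w) / gdet X w)"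
    unfolding ginv11_def ginv12_def by (cases "gdet X w = 0") (simp_all add: field_simps)
  also have "\<dots> = (g22 X w * pd1 f w - g12 X w * pd2 f w) / sqrt (gdet X w)"
    by (rule sqrt_frac[OF gdet_nonneg])
  finally show "sqrt (gdet X w) * (ginv11 X w * pd1 f w + ginv12 X w * pd2 f w) =
   (g22 X w * pd1 f w - g12 X w * pd2 f w) / sqrt (gdet X w)" .
qed

lemma lap_fun2:
  "(\<lambda>w. sqrt (gdet X w) * (ginv12 X w * pd1 f w + ginv22 X w * pd2 f w)) =
   (\<lambda>w. (g11 X w * pd2 f w - g12 X w * pd1 f w) / sqrt (gdet X w))"
proof
  fix w
  have "sqrt (gdet X w) * (ginv12 X w * pd1 f w + ginv22 X w * pd2 f w) =
        sqrt (gdet X w) * ((g11 X w * pd2 f w - g12 X w * pd1 f w) / gdet X w)"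
    unfolding ginv22_def ginv12_def by (cases "gdet X w = 0") (simp_all add: field_simps)
  also have "\<dots> = (g11 X w * pd2 f w - g12 X w * pd1 f w) / sqrt (gdet X w)"
    by (rule sqrt_frac[OF gdet_nonneg])
  finally show "sqrt (gdet X w) * (ginv12 X w * pd1 f w + ginv22 X w * pd2 f w) =
   (g11 X w * pd2 f w - g12 X w * pd1 f w) / sqrt (gdet X w)" .
qed


lemma pd1_at: "((\<lambda>t. F (t, y)) has_real_derivative d) (at x) \<Longrightarrow> pd1 F (x, y) = d"
  unfolding pd1_def by (simp add: vector_derivative_at has_real_derivative_iff_has_vector_derivative)
lemma pd2_at: "((\<lambda>t. F (x, t)) has_real_derivative d) (at y) \<Longrightarrow> pd2 F (x, y) = d"
  unfolding pd2_def by (simp add: vector_derivative_at has_real_derivative_iff_has_vector_derivative)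
lemma pd1_atv: "((\<lambda>t. F (t, y)) has_vector_derivative d) (at x) \<Longrightarrow> pd1 F (x, y) = d"
  unfolding pd1_def by (simp add: vector_derivative_at)
lemma pd2_atv: "((\<lambda>t. F (x, t)) has_vector_derivative d) (at y) \<Longrightarrow> pd2 F (x, y) = d"
  unfolding pd2_def by (simp add: vector_derivative_at)

lemma lap_loc_LAPV:
  fixes X :: "R2 \<Rightarrow> real^3" and f :: "R2 \<Rightarrow> real"
  assumes hX11: "((\<lambda>t. pd1 X (t, y)) has_vector_derivative a1) (at x)"
   and hX21: "((\<lambda>t. pd2 X (t, y)) has_vector_derivative b1) (at x)"
   and hX12: "((\<lambda>t. pd1 X (x, t)) has_vector_derivative a2) (at y)"
   and hX22: "((\<lambda>t. pd2 X (x, t)) has_vector_derivative b2) (at y)"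
   and hf11: "((\<lambda>t. pd1 f (t, y)) has_real_derivative p1) (at x)"
   and hf21: "((\<lambda>t. pd2 f (t, y)) has_real_derivative q1) (at x)"
   and hf12: "((\<lambda>t. pd1 f (x, t)) has_real_derivative p2) (at y)"
   and hf22: "((\<lambda>t. pd2 f (x, t)) has_real_derivative q2) (at y)"
   and D: "gdet X (x,y) > 0"
  shows "lap_loc X f (x,y) = LAPV (pd1 X (x,y)) (pd2 X (x,y)) a1 b1 a2 b2 (pd1 f (x,y)) (pd2 f (x,y)) p1 q1 p2 q2"
proof -
  define a where "a = pd1 X (x,y)"
  define b where "b = pd2 X (x,y)"
  have D': "(\<lambda>t. (pd1 X (t,y)\<bullet>pd1 X (t,y))*(pd2 X (t,y)\<bullet>pd2 X (t,y)) - (pd1 X (t,y)\<bullet>pd2 X (t,y))^2) x > 0"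
    using D by (simp add: gdet_def g11_def g22_def g12_def)
  have D'': "(\<lambda>t. (pd1 X (x,t)\<bullet>pd1 X (x,t))*(pd2 X (x,t)\<bullet>pd2 X (x,t)) - (pd1 X (x,t)\<bullet>pd2 X (x,t))^2) y > 0"
    using D by (simp add: gdet_def g11_def g22_def g12_def)
  have d1: "((\<lambda>t. (g22 X (t,y) * pd1 f (t,y) - g12 X (t,y) * pd2 f (t,y)) / sqrt (gdet X (t,y))) has_real_derivative
     qd (b1\<bullet>b + b\<bullet>b1) (pd1 f (x,y)) (b\<bullet>b) p1 (a1\<bullet>b + a\<bullet>b1) (pd2 f (x,y)) (a\<bullet>b) q1 (gdet X (x,y))
        ((a1\<bullet>a + a\<bullet>a1)*(b\<bullet>b) + (a\<bullet>a)*(b1\<bullet>b + b\<bullet>b1) - 2*(a\<bullet>b)*(a1\<bullet>b + a\<bullet>b1))) (at x)"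
    using quot_deriv[OF inner_hvd[OF hX21 hX21] inner_hvd[OF hX11 hX21] gdet_deriv[OF hX11 hX21] hf11 hf21 D']
    unfolding qd_def a_def b_def by (simp add: gdet_def g11_def g22_def g12_def)
  have d2: "((\<lambda>t. (g11 X (x,t) * pd2 f (x,t) - g12 X (x,t) * pd1 f (x,t)) / sqrt (gdet X (x,t))) has_real_derivative
     qd (a2\<bullet>a + a\<bullet>a2) (pd2 f (x,y)) (a\<bullet>a) q2 (a2\<bullet>b + a\<bullet>b2) (pd1 f (x,y)) (a\<bullet>b) p2 (gdet X (x,y))
        ((a2\<bullet>a + a\<bullet>a2)*(b\<bullet>b) + (a\<bullet>a)*(b2\<bullet>b + b\<bullet>b2) - 2*(a\<bullet>b)*(a2\<bullet>b + a\<bullet>b2))) (at y)"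
    using quot_deriv[OF inner_hvd[OF hX12 hX12] inner_hvd[OF hX12 hX22] gdet_deriv[OF hX12 hX22] hf22 hf12 D'']
    unfolding qd_def a_def b_def by (simp add: gdet_def g11_def g22_def g12_def)
  have "lap_loc X f (x,y) = (1 / sqrt (gdet X (x,y))) *
     (qd (b1\<bullet>b + b\<bullet>b1) (pd1 f (x,y)) (b\<bullet>b) p1 (a1\<bullet>b + a\<bullet>b1) (pd2 f (x,y)) (a\<bullet>b) q1 (gdet X (x,y))
        ((a1\<bullet>a + a\<bullet>a1)*(b\<bullet>b) + (a\<bullet>a)*(b1\<bullet>b + b\<bullet>b1) - 2*(a\<bullet>b)*(a1\<bullet>b + a\<bullet>b1))
    + qd (a2\<bullet>a + a\<bullet>a2) (pd2 f (x,y)) (a\<bullet>a) q2 (a2\<bullet>b + a\<bullet>b2) (pd1 f (x,y)) (a\<bullet>b) p2 (gdet X (x,y))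
        ((a2\<bullet>a + a\<bullet>a2)*(b\<bullet>b) + (a\<bullet>a)*(b2\<bullet>b + b\<bullet>b2) - 2*(a\<bullet>b)*(a2\<bullet>b + a\<bullet>b2)))"
    unfolding lap_loc_def lap_fun1 lap_fun2 using pd1_at[OF d1] pd2_at[OF d2] by simp
  also have "\<dots> = LAPV a b a1 b1 a2 b2 (pd1 f (x,y)) (pd2 f (x,y)) p1 q1 p2 q2"
    unfolding LAPV_def
    apply (simp only: inner_commute[of b1 b] inner_commute[of a1 a] inner_commute[of a2 a] inner_commute[of b2 b])
    apply (rule final_alg)
    using D by (simp_all add: gdet_def g11_def g22_def g12_def a_def b_def)
  finally show ?thesis unfolding a_def b_def .
qed

lemma dist_pair_le: "dist (t::real, s::real) (x, y) \<le> \<bar>t - x\<bar> + \<bar>s - y\<bar>"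
  unfolding dist_Pair_Pair dist_real_def using sqrt_sum_squares_le_sum_abs by simp

lemma square_in_ball:
  assumes "ball (x::real, y::real) r \<subseteq> U" "0 < h" "2*h < r" "x \<le> t" "t \<le> x + h" "y \<le> s" "s \<le> y + h"
  shows "(t, s) \<in> U" "dist (t,s) (x,y) < r"
proof -
  have "dist (t,s) (x,y) \<le> \<bar>t - x\<bar> + \<bar>s - y\<bar>" by (rule dist_pair_le)
  also have "\<dots> \<le> 2*h" using assms by auto
  finally show "dist (t,s) (x,y) < r" using assms by simp
  thus "(t, s) \<in> U" using assms(1) by (auto simp: dist_commute)
qed

lemma schwarz:
  fixes f fa fb fab fba :: "real \<times> real \<Rightarrow> real"
  assumes U: "open U" "(x, y) \<in> U"
    and hf1: "\<forall>w\<in>U. ((\<lambda>t. f (t, snd w)) has_real_derivative fa w) (at (fst w))"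
    and hf2: "\<forall>w\<in>U. ((\<lambda>t. f (fst w, t)) has_real_derivative fb w) (at (snd w))"
    and hf12: "\<forall>w\<in>U. ((\<lambda>t. fa (fst w, t)) has_real_derivative fab w) (at (snd w))"
    and hf21: "\<forall>w\<in>U. ((\<lambda>t. fb (t, snd w)) has_real_derivative fba w) (at (fst w))"
    and c12: "continuous_on U fab" and c21: "continuous_on U fba"
  shows "fab (x, y) = fba (x, y)"
proof (rule ccontr)
  assume ne: "fab (x, y) \<noteq> fba (x, y)"
  define e where "e = \<bar>fab (x, y) - fba (x, y)\<bar> / 2"
  have e: "e > 0" using ne by (simp add: e_def)
  obtain r0 where r0: "r0 > 0" "ball (x,y) r0 \<subseteq> U" using U open_contains_ball by blast
  obtain d1 where d1: "d1 > 0" "\<forall>w\<in>U. dist w (x,y) < d1 \<longrightarrow> dist (fab w) (fab (x,y)) < e"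
    using c12 U e unfolding continuous_on_iff by blast
  obtain d2 where d2: "d2 > 0" "\<forall>w\<in>U. dist w (x,y) < d2 \<longrightarrow> dist (fba w) (fba (x,y)) < e"
    using c21 U e unfolding continuous_on_iff by blast
  define r where "r = min r0 (min d1 d2)"
  have r: "r > 0" "ball (x,y) r \<subseteq> U" using r0 d1 d2 by (auto simp: r_def)
  define h where "h = r / 4"
  have h: "h > 0" "2*h < r" using r by (auto simp: h_def)
  have inU: "\<And>t s. x \<le> t \<Longrightarrow> t \<le> x + h \<Longrightarrow> y \<le> s \<Longrightarrow> s \<le> y + h \<Longrightarrow> (t, s) \<in> U \<and> dist (t,s) (x,y) < r"
    using square_in_ball[OF r(2) h] by blast
  define \<Delta> where "\<Delta> = f (x+h, y+h) - f (x+h, y) - f (x, y+h) + f (x, y)"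
  obtain \<xi> where \<xi>: "x < \<xi>" "\<xi> < x + h"
    "(\<lambda>t. f (t, y+h) - f (t, y)) (x+h) - (\<lambda>t. f (t, y+h) - f (t, y)) x = ((x+h) - x) * (fa (\<xi>, y+h) - fa (\<xi>, y))"
  proof -
    have "\<exists>z>x. z < x + h \<and> (\<lambda>t. f (t, y+h) - f (t, y)) (x+h) - (\<lambda>t. f (t, y+h) - f (t, y)) x = ((x+h) - x) * (fa (z, y+h) - fa (z, y))"
    proof (rule MVT2)
      show "x < x + h" using h by simp
      fix t assume t: "x \<le> t" "t \<le> x + h"
      have "(t, y+h) \<in> U" "(t, y) \<in> U" using inU[of t "y+h"] inU[of t y] t h by auto
      thus "((\<lambda>t. f (t, y+h) - f (t, y)) has_real_derivative fa (t, y+h) - fa (t, y)) (at t)"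
        using hf1 by (intro DERIV_diff) force+
    qed
    thus ?thesis using that by blast
  qed
  obtain \<eta> where \<eta>: "y < \<eta>" "\<eta> < y + h" "fa (\<xi>, y+h) - fa (\<xi>, y) = ((y+h) - y) * fab (\<xi>, \<eta>)"
  proof -
    have "\<exists>z>y. z < y + h \<and> fa (\<xi>, y+h) - fa (\<xi>, y) = ((y+h) - y) * fab (\<xi>, z)"
    proof (rule MVT2)
      show "y < y + h" using h by simp
      fix s assume s: "y \<le> s" "s \<le> y + h"
      have "(\<xi>, s) \<in> U" using inU[of \<xi> s] s \<xi> by auto
      thus "((\<lambda>s. fa (\<xi>, s)) has_real_derivative fab (\<xi>, s)) (at s)" using hf12 by force
    qed
    thus ?thesis using that by blast
  qed
  have D1: "\<Delta> = h * h * fab (\<xi>, \<eta>)" using \<xi>(3) \<eta>(3) unfolding \<Delta>_def by (simp add: algebra_simps)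
  obtain \<eta>' where \<eta>': "y < \<eta>'" "\<eta>' < y + h"
    "(\<lambda>s. f (x+h, s) - f (x, s)) (y+h) - (\<lambda>s. f (x+h, s) - f (x, s)) y = ((y+h) - y) * (fb (x+h, \<eta>') - fb (x, \<eta>'))"
  proof -
    have "\<exists>z>y. z < y + h \<and> (\<lambda>s. f (x+h, s) - f (x, s)) (y+h) - (\<lambda>s. f (x+h, s) - f (x, s)) y = ((y+h) - y) * (fb (x+h, z) - fb (x, z))"
    proof (rule MVT2)
      show "y < y + h" using h by simp
      fix s assume s: "y \<le> s" "s \<le> y + h"
      have "(x+h, s) \<in> U" "(x, s) \<in> U" using inU[of "x+h" s] inU[of x s] s h by auto
      thus "((\<lambda>s. f (x+h, s) - f (x, s)) has_real_derivative fb (x+h, s) - fb (x, s)) (at s)"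
        using hf2 by (intro DERIV_diff) force+
    qed
    thus ?thesis using that by blast
  qed
  obtain \<xi>' where \<xi>': "x < \<xi>'" "\<xi>' < x + h" "fb (x+h, \<eta>') - fb (x, \<eta>') = ((x+h) - x) * fba (\<xi>', \<eta>')"
  proof -
    have "\<exists>z>x. z < x + h \<and> fb (x+h, \<eta>') - fb (x, \<eta>') = ((x+h) - x) * fba (z, \<eta>')"
    proof (rule MVT2)
      show "x < x + h" using h by simp
      fix t assume t: "x \<le> t" "t \<le> x + h"
      have "(t, \<eta>') \<in> U" using inU[of t \<eta>'] t \<eta>' by auto
      thus "((\<lambda>t. fb (t, \<eta>')) has_real_derivative fba (t, \<eta>')) (at t)" using hf21 by force
    qed
    thus ?thesis using that by blast
  qed
  have D2: "\<Delta> = h * h * fba (\<xi>', \<eta>')" using \<eta>'(3) \<xi>'(3) unfolding \<Delta>_def by (simp add: algebra_simps)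
  have eq: "fab (\<xi>, \<eta>) = fba (\<xi>', \<eta>')" using D1 D2 h by simp
  have p1: "(\<xi>, \<eta>) \<in> U" "dist (\<xi>, \<eta>) (x,y) < r" using inU[of \<xi> \<eta>] \<xi> \<eta> by auto
  have p2: "(\<xi>', \<eta>') \<in> U" "dist (\<xi>', \<eta>') (x,y) < r" using inU[of \<xi>' \<eta>'] \<xi>' \<eta>' by auto
  have "dist (fab (\<xi>, \<eta>)) (fab (x,y)) < e" using d1 p1 by (auto simp: r_def)
  moreover have "dist (fba (\<xi>', \<eta>')) (fba (x,y)) < e" using d2 p2 by (auto simp: r_def)
  ultimately have "\<bar>fab (x,y) - fba (x,y)\<bar> < 2*e" using eq by (simp add: dist_real_def)
  thus False by (simp add: e_def)
qed

lemma frechet_partials: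
  fixes f f2 :: "real \<times> real \<Rightarrow> real" and f1 :: real
  assumes U: "open U" "(x, y) \<in> U"
    and hf1: "((\<lambda>t. f (t, y)) has_real_derivative f1) (at x)"
    and hf2: "\<forall>w\<in>U. ((\<lambda>t. f (fst w, t)) has_real_derivative f2 w) (at (snd w))"
    and c2: "continuous_on U f2"
  shows "(f has_derivative (\<lambda>(h, k). h * f1 + k * f2 (x, y))) (at (x, y))"
proof -
  obtain r where r: "r > 0" "ball (x,y) r \<subseteq> U" using U open_contains_ball by blast
  define X where "X = ball x (r/2)"
  define Y where "Y = ball y (r/2)"
  have XY: "X \<times> Y \<subseteq> U"
  proof
    fix p assume "p \<in> X \<times> Y"
    then obtain a b where p: "p = (a,b)" "dist x a < r/2" "dist y b < r/2" by (auto simp: X_def Y_def)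
    have "dist (a,b) (x,y) \<le> \<bar>a - x\<bar> + \<bar>b - y\<bar>"
      unfolding dist_Pair_Pair dist_real_def using sqrt_sum_squares_le_sum_abs by simp
    also have "\<dots> < r" using p by (simp add: dist_real_def abs_minus_commute[of a x] abs_minus_commute[of b y])
    finally show "p \<in> U" using r p by (auto simp: dist_commute)
  qed
  have opXY: "open (X \<times> Y)" by (simp add: X_def Y_def open_Times)
  have inXY: "(x, y) \<in> X \<times> Y" using r by (simp add: X_def Y_def)
  define F where "F = (\<lambda>a b. f (a, b))"
  have "((\<lambda>(a, b). F a b) has_derivative (\<lambda>(tx, ty). tx * f1 + blinfun_apply (blinfun_scaleR_left (f2 (x, y))) ty)) (at (x, y) within X \<times> Y)"
  proof (rule has_derivative_partialsI)
    have e: "(\<lambda>h. h * f1) = (*) f1" by (rule ext) (simp add: mult.commute)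
    show "((\<lambda>a. F a y) has_derivative (\<lambda>h. h * f1)) (at x within X)"
      unfolding e F_def using hf1 unfolding has_field_derivative_def by (rule has_derivative_at_withinI)
    fix a b assume ab: "a \<in> X" "b \<in> Y"
    hence "(a, b) \<in> U" using XY by auto
    hence d: "((\<lambda>t. f (a, t)) has_real_derivative f2 (a, b)) (at b)" using hf2 by force
    have e: "blinfun_apply (blinfun_scaleR_left (f2 (a, b))) = (*) (f2 (a, b))" by (rule ext) (simp add: mult.commute)
    show "((\<lambda>b. F a b) has_derivative blinfun_apply (blinfun_scaleR_left (f2 (a, b)))) (at b within Y)"
      unfolding e F_def using d unfolding has_field_derivative_def by (rule has_derivative_at_withinI)
  next
    have "continuous_on (X \<times> Y) (\<lambda>p. blinfun_scaleR_left (f2 p))"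
      by (intro continuous_on_compose2[OF _ continuous_on_subset[OF c2 XY], of UNIV blinfun_scaleR_left])
         (auto intro: linear_continuous_on bounded_linear_blinfun_scaleR_left)
    hence "continuous (at (x, y) within X \<times> Y) (\<lambda>p. blinfun_scaleR_left (f2 p))"
      using inXY continuous_on_eq_continuous_within by blast
    thus "continuous (at (x, y) within X \<times> Y) (\<lambda>(a, b). blinfun_scaleR_left (f2 (a, b)))"
      by (simp add: case_prod_beta')
  qed (use r in \<open>auto simp: Y_def\<close>)
  hence "((\<lambda>(a, b). F a b) has_derivative (\<lambda>(tx, ty). tx * f1 + blinfun_apply (blinfun_scaleR_left (f2 (x, y))) ty)) (at (x, y))"
    using at_within_open[OF inXY opXY] by simp
  thus ?thesis unfolding F_def by (simp add: case_prod_beta' mult.commute)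
qed


lemma line_deriv:
  fixes x y v1 v2 t0 :: real
  shows   "((\<lambda>t. (x + t* v1, y + t* v2)) has_derivative (\<lambda>h. (h* v1, h* v2))) (at t0)"
proof -
  have "((\<lambda>t. (x + t * v1, y + t * v2)) has_derivative (\<lambda>h. (0 + h * v1, 0 + h * v2))) (at t0)"
    by (intro has_derivative_Pair has_derivative_add has_derivative_const bounded_linear_imp_has_derivative) (rule bounded_linear_mult_left)+
  thus ?thesis by simp
qed

lemma dir_deriv:
  fixes f f1 f2 :: "real \<times> real \<Rightarrow> real"
  assumes U: "open U" "(x + t0* v1, y + t0* v2) \<in> U"
    and hf1: "\<forall>w\<in>U. ((\<lambda>t. f (t, snd w)) has_real_derivative f1 w) (at (fst w))"
    and hf2: "\<forall>w\<in>U. ((\<lambda>t. f (fst w, t)) has_real_derivative f2 w) (at (snd w))"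
    and c2: "continuous_on U f2"
  shows "((\<lambda>t. f (x + t* v1, y + t* v2)) has_real_derivative
           (v1 * f1 (x + t0* v1, y + t0* v2) + v2 * f2 (x + t0* v1, y + t0* v2))) (at t0)"
proof -
  let ?p = "(x + t0* v1, y + t0* v2)"
  have "((\<lambda>t. f (t, y + t0* v2)) has_real_derivative f1 ?p) (at (x + t0* v1))" using hf1 U by force
  from frechet_partials[OF U this hf2 c2]
  have F: "(f has_derivative (\<lambda>(h, k). h * f1 ?p + k * f2 ?p)) (at ?p)" .
  have "((\<lambda>t. f (x + t* v1, y + t* v2)) has_derivative (\<lambda>h. (\<lambda>(h, k). h * f1 ?p + k * f2 ?p) (h* v1, h* v2))) (at t0)"
    using has_derivative_compose[OF line_deriv F] by simp
  moreover have "(\<lambda>h. (\<lambda>(h, k). h * f1 ?p + k * f2 ?p) (h* v1, h* v2)) = (*) (v1 * f1 ?p + v2 * f2 ?p)"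
    by (rule ext) (simp add: algebra_simps)
  ultimately show ?thesis unfolding has_field_derivative_def by simp
qed

lemma max_second:
  fixes f f1 f2 f11 f12 f21 f22 :: "real \<times> real \<Rightarrow> real"
  assumes U: "open U" "(x, y) \<in> U"
    and mx: "\<forall>w\<in>U. f w \<le> f (x, y)"
    and hf1: "\<forall>w\<in>U. ((\<lambda>t. f (t, snd w)) has_real_derivative f1 w) (at (fst w))"
    and hf2: "\<forall>w\<in>U. ((\<lambda>t. f (fst w, t)) has_real_derivative f2 w) (at (snd w))"
    and hf11: "\<forall>w\<in>U. ((\<lambda>t. f1 (t, snd w)) has_real_derivative f11 w) (at (fst w))"
    and hf12: "\<forall>w\<in>U. ((\<lambda>t. f1 (fst w, t)) has_real_derivative f12 w) (at (snd w))"
    and hf21: "\<forall>w\<in>U. ((\<lambda>t. f2 (t, snd w)) has_real_derivative f21 w) (at (fst w))"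
    and hf22: "\<forall>w\<in>U. ((\<lambda>t. f2 (fst w, t)) has_real_derivative f22 w) (at (snd w))"
    and c2: "continuous_on U f2" and c12: "continuous_on U f12" and c22: "continuous_on U f22"
  shows "f1 (x, y) = 0" "f2 (x, y) = 0"
    "v1 * (v1 * f11 (x, y) + v2 * f12 (x, y)) + v2 * (v1 * f21 (x, y) + v2 * f22 (x, y)) \<le> 0"
proof -
  obtain r where r: "r > 0" "ball (x,y) r \<subseteq> U" using U open_contains_ball by blast
  define \<delta> where "\<delta> = r / (1 + \<bar>v1\<bar> + \<bar>v2\<bar>)"
  have \<delta>: "\<delta> > 0" using r by (simp add: \<delta>_def add_pos_nonneg)
  have inU: "(x + t* v1, y + t* v2) \<in> U" if t: "\<bar>t\<bar> < \<delta>" for t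
  proof -
    have "dist (x + t* v1, y + t* v2) (x, y) \<le> \<bar>t* v1\<bar> + \<bar>t* v2\<bar>"
      unfolding dist_Pair_Pair dist_real_def using sqrt_sum_squares_le_sum_abs by simp
    also have "\<dots> = \<bar>t\<bar> * (\<bar>v1\<bar> + \<bar>v2\<bar>)" by (simp add: abs_mult algebra_simps)
    also have "\<dots> \<le> \<bar>t\<bar> * (1 + \<bar>v1\<bar> + \<bar>v2\<bar>)" by (simp add: mult_left_mono)
    also have "\<dots> < \<delta> * (1 + \<bar>v1\<bar> + \<bar>v2\<bar>)" using t by (intro mult_strict_right_mono) (auto simp: add_pos_nonneg)
    also have "\<dots> = r" unfolding \<delta>_def by (simp add: add_pos_nonneg)
    finally show ?thesis using r by (auto simp: dist_commute)
  qed
  show f1z: "f1 (x, y) = 0"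
  proof (rule DERIV_local_max)
    show "((\<lambda>t. f (t, y)) has_real_derivative f1 (x, y)) (at x)" using hf1 U by force
    show "0 < r" by (rule r)
    show "\<forall>t. \<bar>x - t\<bar> < r \<longrightarrow> f (t, y) \<le> f (x, y)"
    proof (intro allI impI)
      fix t assume "\<bar>x - t\<bar> < r"
      hence "(t, y) \<in> U" using r by (auto simp: dist_Pair_Pair dist_real_def)
      thus "f (t, y) \<le> f (x, y)" using mx by blast
    qed
  qed
  show f2z: "f2 (x, y) = 0"
  proof (rule DERIV_local_max)
    show "((\<lambda>t. f (x, t)) has_real_derivative f2 (x, y)) (at y)" using hf2 U by force
    show "0 < r" by (rule r)
    show "\<forall>t. \<bar>y - t\<bar> < r \<longrightarrow> f (x, t) \<le> f (x, y)"
    proof (intro allI impI)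
      fix t assume "\<bar>y - t\<bar> < r"
      hence "(x, t) \<in> U" using r by (auto simp: dist_Pair_Pair dist_real_def)
      thus "f (x, t) \<le> f (x, y)" using mx by blast
    qed
  qed
  define G1 where "G1 = (\<lambda>t. v1 * f1 (x + t* v1, y + t* v2) + v2 * f2 (x + t* v1, y + t* v2))"
  define c where "c = v1 * (v1 * f11 (x, y) + v2 * f12 (x, y)) + v2 * (v1 * f21 (x, y) + v2 * f22 (x, y))"
  have gd: "((\<lambda>t. f (x + t* v1, y + t* v2)) has_real_derivative G1 t) (at t)" if "\<bar>t\<bar> < \<delta>" for t
    unfolding G1_def using dir_deriv[OF U(1) inU[OF that] hf1 hf2 c2] .
  have d1: "((\<lambda>t. f1 (x + t* v1, y + t* v2)) has_real_derivative (v1 * f11 (x, y) + v2 * f12 (x, y))) (at 0)"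
    using dir_deriv[of U x 0 v1 y v2 f1 f11 f12] U hf11 hf12 c12 by simp
  have d2: "((\<lambda>t. f2 (x + t* v1, y + t* v2)) has_real_derivative (v1 * f21 (x, y) + v2 * f22 (x, y))) (at 0)"
    using dir_deriv[of U x 0 v1 y v2 f2 f21 f22] U hf21 hf22 c22 by simp
  have G1d: "(G1 has_real_derivative c) (at 0)"
    unfolding G1_def c_def by (intro DERIV_add DERIV_cmult d1 d2)
  have G10: "G1 0 = 0" unfolding G1_def using f1z f2z by simp
  show "c \<le> 0"
  proof (rule ccontr)
    assume "\<not> c \<le> 0"
    hence "c > 0" by simp
    from DERIV_pos_inc_right[OF G1d this] obtain d where d: "d > 0" "\<forall>h>0. h < d \<longrightarrow> G1 0 < G1 (0 + h)" by blast
    define h where "h = min d \<delta> / 2"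
    have h: "h > 0" "h < d" "h < \<delta>" using d \<delta> by (auto simp: h_def)
    obtain s where s: "0 < s" "s < h" "f (x + h* v1, y + h* v2) - f (x + 0* v1, y + 0* v2) = (h - 0) * G1 s"
    proof -
      have "\<exists>s>0. s < h \<and> (\<lambda>t. f (x + t* v1, y + t* v2)) h - (\<lambda>t. f (x + t* v1, y + t* v2)) 0 = (h - 0) * G1 s"
      proof (rule MVT2)
        show "0 < h" by (rule h)
        fix t assume "0 \<le> t" "t \<le> h"
        hence "\<bar>t\<bar> < \<delta>" using h by auto
        thus "((\<lambda>t. f (x + t* v1, y + t* v2)) has_real_derivative G1 t) (at t)" by (rule gd)
      qed
      thus ?thesis using that by auto
    qed
    have "G1 s > 0" using d s h G10 by auto
    hence "h * G1 s > 0" using h(1) by simp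
    hence "f (x + h* v1, y + h* v2) > f (x, y)" using s(3) by simp
    moreover have "f (x + h* v1, y + h* v2) \<le> f (x, y)" using mx inU[of h] h by auto
    ultimately show False by simp
  qed
qed

definition hd1 :: "(R2 \<Rightarrow> real) \<Rightarrow> real \<Rightarrow> R2 \<Rightarrow> bool" where
  "hd1 f d w \<longleftrightarrow> ((\<lambda>t. f (t, snd w)) has_real_derivative d) (at (fst w))"
definition hd2 :: "(R2 \<Rightarrow> real) \<Rightarrow> real \<Rightarrow> R2 \<Rightarrow> bool" where
  "hd2 f d w \<longleftrightarrow> ((\<lambda>t. f (fst w, t)) has_real_derivative d) (at (snd w))"

definition J2 :: "R2 set \<Rightarrow> (R2 \<Rightarrow> real) \<Rightarrow> (R2 \<Rightarrow> real) \<Rightarrow> (R2 \<Rightarrow> real) \<Rightarrow> (R2 \<Rightarrow> real)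
   \<Rightarrow> (R2 \<Rightarrow> real) \<Rightarrow> (R2 \<Rightarrow> real) \<Rightarrow> (R2 \<Rightarrow> real) \<Rightarrow> bool" where
  "J2 U f f1 f2 f11 f12 f21 f22 \<longleftrightarrow>
    (\<forall>w\<in>U. hd1 f (f1 w) w \<and> hd2 f (f2 w) w \<and> hd1 f1 (f11 w) w \<and> hd2 f1 (f12 w) w
       \<and> hd1 f2 (f21 w) w \<and> hd2 f2 (f22 w) w) \<and>
    continuous_on U f \<and> continuous_on U f1 \<and> continuous_on U f2 \<and> continuous_on U f11 \<and>
    continuous_on U f12 \<and> continuous_on U f21 \<and> continuous_on U f22"

lemma hd1_pd: "(\<lambda>t. f (t, snd w)) differentiable (at (fst w)) \<Longrightarrow> hd1 f (pd1 f w) w"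
  unfolding hd1_def pd1_def has_real_derivative_iff_has_vector_derivative
  by (simp add: vector_derivative_works[symmetric])
lemma hd2_pd: "(\<lambda>t. f (fst w, t)) differentiable (at (snd w)) \<Longrightarrow> hd2 f (pd2 f w) w"
  unfolding hd2_def pd2_def has_real_derivative_iff_has_vector_derivative
  by (simp add: vector_derivative_works[symmetric])

lemma Ck2_unfold:
  "Ck 2 U f \<longleftrightarrow> continuous_on U f \<and>
      (\<forall>z\<in>U. (\<lambda>t. f (t, snd z)) differentiable (at (fst z)) \<and> (\<lambda>t. f (fst z, t)) differentiable (at (snd z))) \<and>
      continuous_on U (pd1 f) \<and>
      (\<forall>z\<in>U. (\<lambda>t. pd1 f (t, snd z)) differentiable (at (fst z)) \<and> (\<lambda>t. pd1 f (fst z, t)) differentiable (at (snd z))) \<and>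
      continuous_on U (pd1 (pd1 f)) \<and> continuous_on U (pd2 (pd1 f)) \<and>
      continuous_on U (pd2 f) \<and>
      (\<forall>z\<in>U. (\<lambda>t. pd2 f (t, snd z)) differentiable (at (fst z)) \<and> (\<lambda>t. pd2 f (fst z, t)) differentiable (at (snd z))) \<and>
      continuous_on U (pd1 (pd2 f)) \<and> continuous_on U (pd2 (pd2 f))"
  by (simp add: numeral_2_eq_2)

lemma J2_Ck:
  fixes f :: "R2 \<Rightarrow> real"
  assumes "Ck 2 U f"
  shows "J2 U f (pd1 f) (pd2 f) (pd1 (pd1 f)) (pd2 (pd1 f)) (pd1 (pd2 f)) (pd2 (pd2 f))"
  using assms unfolding Ck2_unfold J2_def by (auto intro: hd1_pd hd2_pd)

lemma J2_diff:
  assumes "J2 U f f1 f2 f11 f12 f21 f22" "J2 U k k1 k2 k11 k12 k21 k22"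
  shows "J2 U (\<lambda>w. f w - k w) (\<lambda>w. f1 w - k1 w) (\<lambda>w. f2 w - k2 w) (\<lambda>w. f11 w - k11 w)
     (\<lambda>w. f12 w - k12 w) (\<lambda>w. f21 w - k21 w) (\<lambda>w. f22 w - k22 w)"
  unfolding J2_def
proof (intro conjI ballI)
  fix w assume w: "w \<in> U"
  have A: "hd1 f (f1 w) w" "hd2 f (f2 w) w" "hd1 f1 (f11 w) w" "hd2 f1 (f12 w) w"
       "hd1 f2 (f21 w) w" "hd2 f2 (f22 w) w" using assms(1) w unfolding J2_def by auto
  have B: "hd1 k (k1 w) w" "hd2 k (k2 w) w" "hd1 k1 (k11 w) w" "hd2 k1 (k12 w) w"
       "hd1 k2 (k21 w) w" "hd2 k2 (k22 w) w" using assms(2) w unfolding J2_def by auto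
  show "hd1 (\<lambda>w. f w - k w) (f1 w - k1 w) w" using A(1) B(1) unfolding hd1_def by (rule DERIV_diff)
  show "hd2 (\<lambda>w. f w - k w) (f2 w - k2 w) w" using A(2) B(2) unfolding hd2_def by (rule DERIV_diff)
  show "hd1 (\<lambda>w. f1 w - k1 w) (f11 w - k11 w) w" using A(3) B(3) unfolding hd1_def by (rule DERIV_diff)
  show "hd2 (\<lambda>w. f1 w - k1 w) (f12 w - k12 w) w" using A(4) B(4) unfolding hd2_def by (rule DERIV_diff)
  show "hd1 (\<lambda>w. f2 w - k2 w) (f21 w - k21 w) w" using A(5) B(5) unfolding hd1_def by (rule DERIV_diff)
  show "hd2 (\<lambda>w. f2 w - k2 w) (f22 w - k22 w) w" using A(6) B(6) unfolding hd2_def by (rule DERIV_diff)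
qed (use assms in \<open>simp_all add: J2_def continuous_on_diff\<close>)

lemma J2_cmult:
  assumes "J2 U f f1 f2 f11 f12 f21 f22"
  shows "J2 U (\<lambda>w. c * f w) (\<lambda>w. c * f1 w) (\<lambda>w. c * f2 w) (\<lambda>w. c * f11 w)
     (\<lambda>w. c * f12 w) (\<lambda>w. c * f21 w) (\<lambda>w. c * f22 w)"
  unfolding J2_def
proof (intro conjI ballI)
  fix w assume w: "w \<in> U"
  have A: "hd1 f (f1 w) w" "hd2 f (f2 w) w" "hd1 f1 (f11 w) w" "hd2 f1 (f12 w) w"
       "hd1 f2 (f21 w) w" "hd2 f2 (f22 w) w" using assms(1) w unfolding J2_def by auto
  show "hd1 (\<lambda>w. c * f w) (c * f1 w) w" using A(1) unfolding hd1_def by (rule DERIV_cmult)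
  show "hd2 (\<lambda>w. c * f w) (c * f2 w) w" using A(2) unfolding hd2_def by (rule DERIV_cmult)
  show "hd1 (\<lambda>w. c * f1 w) (c * f11 w) w" using A(3) unfolding hd1_def by (rule DERIV_cmult)
  show "hd2 (\<lambda>w. c * f1 w) (c * f12 w) w" using A(4) unfolding hd2_def by (rule DERIV_cmult)
  show "hd1 (\<lambda>w. c * f2 w) (c * f21 w) w" using A(5) unfolding hd1_def by (rule DERIV_cmult)
  show "hd2 (\<lambda>w. c * f2 w) (c * f22 w) w" using A(6) unfolding hd2_def by (rule DERIV_cmult)
qed (use assms in \<open>simp_all add: J2_def continuous_on_mult_left\<close>)

lemma J2_comp:
  fixes \<Psi> \<Psi>1 \<Psi>2 :: "real \<Rightarrow> real"
  assumes J: "J2 U f f1 f2 f11 f12 f21 f22"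
    and V: "open V" "f ` U \<subseteq> V"
    and d1: "\<And>s. s \<in> V \<Longrightarrow> (\<Psi> has_real_derivative \<Psi>1 s) (at s)"
    and d2: "\<And>s. s \<in> V \<Longrightarrow> (\<Psi>1 has_real_derivative \<Psi>2 s) (at s)"
    and c2: "continuous_on V \<Psi>2"
  shows "J2 U (\<lambda>w. \<Psi> (f w)) (\<lambda>w. \<Psi>1 (f w) * f1 w) (\<lambda>w. \<Psi>1 (f w) * f2 w)
     (\<lambda>w. \<Psi>2 (f w) * f1 w * f1 w + \<Psi>1 (f w) * f11 w)
     (\<lambda>w. \<Psi>2 (f w) * f2 w * f1 w + \<Psi>1 (f w) * f12 w)
     (\<lambda>w. \<Psi>2 (f w) * f1 w * f2 w + \<Psi>1 (f w) * f21 w)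
     (\<lambda>w. \<Psi>2 (f w) * f2 w * f2 w + \<Psi>1 (f w) * f22 w)"
proof -
  have c1: "continuous_on V \<Psi>1"
    using DERIV_isCont[OF d2] by (intro continuous_at_imp_continuous_on ballI) auto
  have c0: "continuous_on V \<Psi>"
    using DERIV_isCont[OF d1] by (intro continuous_at_imp_continuous_on ballI) auto
  have cf: "continuous_on U f" using J unfolding J2_def by simp
  have cc: "continuous_on U (\<lambda>w. g (f w))" if "continuous_on V g" for g
    using continuous_on_compose2[OF that cf V(2)] .
  have chain1: "hd1 (\<lambda>w. g (f w)) (g' (f w) * d) w" if "w \<in> U" "hd1 f d w"
    "\<And>s. s \<in> V \<Longrightarrow> (g has_real_derivative g' s) (at s)" for g g' d w
  proof -
    have fw: "f (fst w, snd w) \<in> V" using V that(1) by auto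
    show ?thesis using DERIV_chain2[OF that(3)[OF fw] that(2)[unfolded hd1_def]] unfolding hd1_def by simp
  qed
  have chain2: "hd2 (\<lambda>w. g (f w)) (g' (f w) * d) w" if "w \<in> U" "hd2 f d w"
    "\<And>s. s \<in> V \<Longrightarrow> (g has_real_derivative g' s) (at s)" for g g' d w
  proof -
    have fw: "f (fst w, snd w) \<in> V" using V that(1) by auto
    show ?thesis using DERIV_chain2[OF that(3)[OF fw] that(2)[unfolded hd2_def]] unfolding hd2_def by simp
  qed
  show ?thesis unfolding J2_def
  proof (intro conjI ballI)
    fix w assume w: "w \<in> U"
    have J': "hd1 f (f1 w) w" "hd2 f (f2 w) w" "hd1 f1 (f11 w) w" "hd2 f1 (f12 w) w"
       "hd1 f2 (f21 w) w" "hd2 f2 (f22 w) w" using J w unfolding J2_def by auto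
    show "hd1 (\<lambda>w. \<Psi> (f w)) (\<Psi>1 (f w) * f1 w) w" by (rule chain1[OF w J'(1) d1])
    show "hd2 (\<lambda>w. \<Psi> (f w)) (\<Psi>1 (f w) * f2 w) w" by (rule chain2[OF w J'(2) d1])
    show "hd1 (\<lambda>w. \<Psi>1 (f w) * f1 w) (\<Psi>2 (f w) * f1 w * f1 w + \<Psi>1 (f w) * f11 w) w"
      using DERIV_mult2[OF chain1[OF w J'(1) d2, unfolded hd1_def] J'(3)[unfolded hd1_def]]
      unfolding hd1_def by simp
    show "hd2 (\<lambda>w. \<Psi>1 (f w) * f1 w) (\<Psi>2 (f w) * f2 w * f1 w + \<Psi>1 (f w) * f12 w) w"
      using DERIV_mult2[OF chain2[OF w J'(2) d2, unfolded hd2_def] J'(4)[unfolded hd2_def]]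
      unfolding hd2_def by simp
    show "hd1 (\<lambda>w. \<Psi>1 (f w) * f2 w) (\<Psi>2 (f w) * f1 w * f2 w + \<Psi>1 (f w) * f21 w) w"
      using DERIV_mult2[OF chain1[OF w J'(1) d2, unfolded hd1_def] J'(5)[unfolded hd1_def]]
      unfolding hd1_def by simp
    show "hd2 (\<lambda>w. \<Psi>1 (f w) * f2 w) (\<Psi>2 (f w) * f2 w * f2 w + \<Psi>1 (f w) * f22 w) w"
      using DERIV_mult2[OF chain2[OF w J'(2) d2, unfolded hd2_def] J'(6)[unfolded hd2_def]]
      unfolding hd2_def by simp
  next
    have cJ: "continuous_on U f1" "continuous_on U f2" "continuous_on U f11" "continuous_on U f12"
      "continuous_on U f21" "continuous_on U f22" using J unfolding J2_def by auto
    note C = cc[OF c0] cc[OF c1] cc[OF c2]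
    show "continuous_on U (\<lambda>w. \<Psi> (f w))" by (rule C(1))
    show "continuous_on U (\<lambda>w. \<Psi>1 (f w) * f1 w)" by (intro continuous_on_mult C cJ)
    show "continuous_on U (\<lambda>w. \<Psi>1 (f w) * f2 w)" by (intro continuous_on_mult C cJ)
    show "continuous_on U (\<lambda>w. \<Psi>2 (f w) * f1 w * f1 w + \<Psi>1 (f w) * f11 w)" by (intro continuous_on_mult continuous_on_add C cJ)
    show "continuous_on U (\<lambda>w. \<Psi>2 (f w) * f2 w * f1 w + \<Psi>1 (f w) * f12 w)" by (intro continuous_on_mult continuous_on_add C cJ)
    show "continuous_on U (\<lambda>w. \<Psi>2 (f w) * f1 w * f2 w + \<Psi>1 (f w) * f21 w)" by (intro continuous_on_mult continuous_on_add C cJ)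
    show "continuous_on U (\<lambda>w. \<Psi>2 (f w) * f2 w * f2 w + \<Psi>1 (f w) * f22 w)" by (intro continuous_on_mult continuous_on_add C cJ)
  qed
qed


lemma hvd1: "(\<lambda>t. F (t, snd w)) differentiable (at (fst w)) \<Longrightarrow>
   ((\<lambda>t. F (t, snd w)) has_vector_derivative pd1 F w) (at (fst w))"
  unfolding pd1_def by (simp add: vector_derivative_works[symmetric])
lemma hvd2: "(\<lambda>t. F (fst w, t)) differentiable (at (snd w)) \<Longrightarrow>
   ((\<lambda>t. F (fst w, t)) has_vector_derivative pd2 F w) (at (snd w))"
  unfolding pd2_def by (simp add: vector_derivative_works[symmetric])

lemma hd_inner1:
  fixes A B :: "R2 \<Rightarrow> real^3"
  assumes "((\<lambda>t. A (t, snd w)) has_vector_derivative A') (at (fst w))"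
          "((\<lambda>t. B (t, snd w)) has_vector_derivative B') (at (fst w))"
  shows "hd1 (\<lambda>w. c * (A w \<bullet> B w)) (c * (A' \<bullet> B w + A w \<bullet> B')) w"
  using DERIV_cmult[OF inner_hvd[OF assms]] unfolding hd1_def by simp
lemma hd_inner2:
  fixes A B :: "R2 \<Rightarrow> real^3"
  assumes "((\<lambda>t. A (fst w, t)) has_vector_derivative A') (at (snd w))"
          "((\<lambda>t. B (fst w, t)) has_vector_derivative B') (at (snd w))"
  shows "hd2 (\<lambda>w. c * (A w \<bullet> B w)) (c * (A' \<bullet> B w + A w \<bullet> B')) w"
  using DERIV_cmult[OF inner_hvd[OF assms]] unfolding hd2_def by simp

lemma J2_sq:
  fixes X :: "R2 \<Rightarrow> real^3"
  assumes "Ck 2 U X"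
  shows "J2 U (\<lambda>w. 1 + X w \<bullet> X w) (\<lambda>w. 2 * (X w \<bullet> pd1 X w)) (\<lambda>w. 2 * (X w \<bullet> pd2 X w))
    (\<lambda>w. 2 * (pd1 X w \<bullet> pd1 X w + X w \<bullet> pd1 (pd1 X) w))
    (\<lambda>w. 2 * (pd2 X w \<bullet> pd1 X w + X w \<bullet> pd2 (pd1 X) w))
    (\<lambda>w. 2 * (pd1 X w \<bullet> pd2 X w + X w \<bullet> pd1 (pd2 X) w))
    (\<lambda>w. 2 * (pd2 X w \<bullet> pd2 X w + X w \<bullet> pd2 (pd2 X) w))"
proof -
  note C = assms[unfolded Ck2_unfold]
  show ?thesis unfolding J2_def
  proof (intro conjI ballI)
    fix w assume w: "w \<in> U"
    have X1: "((\<lambda>t. X (t, snd w)) has_vector_derivative pd1 X w) (at (fst w))" using C w by (intro hvd1) auto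
    have X2: "((\<lambda>t. X (fst w, t)) has_vector_derivative pd2 X w) (at (snd w))" using C w by (intro hvd2) auto
    have X11: "((\<lambda>t. pd1 X (t, snd w)) has_vector_derivative pd1 (pd1 X) w) (at (fst w))" using C w by (intro hvd1) auto
    have X12: "((\<lambda>t. pd1 X (fst w, t)) has_vector_derivative pd2 (pd1 X) w) (at (snd w))" using C w by (intro hvd2) auto
    have X21: "((\<lambda>t. pd2 X (t, snd w)) has_vector_derivative pd1 (pd2 X) w) (at (fst w))" using C w by (intro hvd1) auto
    have X22: "((\<lambda>t. pd2 X (fst w, t)) has_vector_derivative pd2 (pd2 X) w) (at (snd w))" using C w by (intro hvd2) auto
    have "hd1 (\<lambda>w. 1 * (X w \<bullet> X w)) (1 * (pd1 X w \<bullet> X w + X w \<bullet> pd1 X w)) w" by (rule hd_inner1[OF X1 X1])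
    thus "hd1 (\<lambda>w. 1 + X w \<bullet> X w) (2 * (X w \<bullet> pd1 X w)) w"
      unfolding hd1_def using DERIV_add[OF DERIV_const[of 1]] by (fastforce simp: inner_commute)
    have "hd2 (\<lambda>w. 1 * (X w \<bullet> X w)) (1 * (pd2 X w \<bullet> X w + X w \<bullet> pd2 X w)) w" by (rule hd_inner2[OF X2 X2])
    thus "hd2 (\<lambda>w. 1 + X w \<bullet> X w) (2 * (X w \<bullet> pd2 X w)) w"
      unfolding hd2_def using DERIV_add[OF DERIV_const[of 1]] by (fastforce simp: inner_commute)
    have "hd1 (\<lambda>w. 2 * (X w \<bullet> pd1 X w)) (2 * (pd1 X w \<bullet> pd1 X w + X w \<bullet> pd1 (pd1 X) w)) w"
      by (rule hd_inner1[OF X1 X11])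
    thus "hd1 (\<lambda>w. 2 * (X w \<bullet> pd1 X w)) (2 * (pd1 X w \<bullet> pd1 X w + X w \<bullet> pd1 (pd1 X) w)) w" .
    have "hd2 (\<lambda>w. 2 * (X w \<bullet> pd1 X w)) (2 * (pd2 X w \<bullet> pd1 X w + X w \<bullet> pd2 (pd1 X) w)) w"
      by (rule hd_inner2[OF X2 X12])
    thus "hd2 (\<lambda>w. 2 * (X w \<bullet> pd1 X w)) (2 * (pd2 X w \<bullet> pd1 X w + X w \<bullet> pd2 (pd1 X) w)) w" .
    show "hd1 (\<lambda>w. 2 * (X w \<bullet> pd2 X w)) (2 * (pd1 X w \<bullet> pd2 X w + X w \<bullet> pd1 (pd2 X) w)) w"
      by (rule hd_inner1[OF X1 X21])
    show "hd2 (\<lambda>w. 2 * (X w \<bullet> pd2 X w)) (2 * (pd2 X w \<bullet> pd2 X w + X w \<bullet> pd2 (pd2 X) w)) w"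
      by (rule hd_inner2[OF X2 X22])
  next
    have c: "continuous_on U X" "continuous_on U (pd1 X)" "continuous_on U (pd2 X)"
      "continuous_on U (pd1 (pd1 X))" "continuous_on U (pd2 (pd1 X))"
      "continuous_on U (pd1 (pd2 X))" "continuous_on U (pd2 (pd2 X))" using C by auto
    show "continuous_on U (\<lambda>w. 1 + X w \<bullet> X w)" by (intro continuous_on_add continuous_on_const continuous_on_inner c)
    show "continuous_on U (\<lambda>w. 2 * (X w \<bullet> pd1 X w))" by (intro continuous_on_mult continuous_on_const continuous_on_inner c)
    show "continuous_on U (\<lambda>w. 2 * (X w \<bullet> pd2 X w))" by (intro continuous_on_mult continuous_on_const continuous_on_inner c)
    show "continuous_on U (\<lambda>w. 2 * (pd1 X w \<bullet> pd1 X w + X w \<bullet> pd1 (pd1 X) w))" by (intro continuous_on_mult continuous_on_add continuous_on_const continuous_on_inner c)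
    show "continuous_on U (\<lambda>w. 2 * (pd2 X w \<bullet> pd1 X w + X w \<bullet> pd2 (pd1 X) w))" by (intro continuous_on_mult continuous_on_add continuous_on_const continuous_on_inner c)
    show "continuous_on U (\<lambda>w. 2 * (pd1 X w \<bullet> pd2 X w + X w \<bullet> pd1 (pd2 X) w))" by (intro continuous_on_mult continuous_on_add continuous_on_const continuous_on_inner c)
    show "continuous_on U (\<lambda>w. 2 * (pd2 X w \<bullet> pd2 X w + X w \<bullet> pd2 (pd2 X) w))" by (intro continuous_on_mult continuous_on_add continuous_on_const continuous_on_inner c)
  qed
qed


lemma vec_comp_deriv:
  fixes F :: "real \<Rightarrow> real^3"
  assumes "(F has_vector_derivative d) (at x)"
  shows "((\<lambda>t. F t $ k) has_real_derivative d $ k) (at x)"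
proof -
  have "((\<lambda>t. F t $ k) has_derivative (\<lambda>h. (h *\<^sub>R d) $ k)) (at x)"
    using bounded_linear.has_derivative[OF bounded_linear_vec_nth assms[unfolded has_vector_derivative_def]] .
  moreover have "(\<lambda>h. (h *\<^sub>R d) $ k) = (*) (d $ k)" by (rule ext) simp
  ultimately show ?thesis unfolding has_field_derivative_def by simp
qed

lemma schwarz_vec:
  fixes X :: "R2 \<Rightarrow> real^3"
  assumes "Ck 2 U X" "open U" "z \<in> U"
  shows "pd2 (pd1 X) z = pd1 (pd2 X) z"
proof -
  note C = assms(1)[unfolded Ck2_unfold]
  obtain x y where z: "z = (x, y)" by (cases z)
  have "pd2 (pd1 X) (x, y) $ k = pd1 (pd2 X) (x, y) $ k" for k
  proof (rule schwarz[where f = "\<lambda>w. X w $ k" and fa = "\<lambda>w. pd1 X w $ k" and fb = "\<lambda>w. pd2 X w $ k"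
        and fab = "\<lambda>w. pd2 (pd1 X) w $ k" and fba = "\<lambda>w. pd1 (pd2 X) w $ k"])
    show "open U" "(x, y) \<in> U" using assms z by auto
    show "\<forall>w\<in>U. ((\<lambda>t. X (t, snd w) $ k) has_real_derivative pd1 X w $ k) (at (fst w))"
      using C by (auto intro!: vec_comp_deriv hvd1)
    show "\<forall>w\<in>U. ((\<lambda>t. X (fst w, t) $ k) has_real_derivative pd2 X w $ k) (at (snd w))"
      using C by (auto intro!: vec_comp_deriv hvd2)
    show "\<forall>w\<in>U. ((\<lambda>t. pd1 X (fst w, t) $ k) has_real_derivative pd2 (pd1 X) w $ k) (at (snd w))"
      using C by (auto intro!: vec_comp_deriv hvd2)
    show "\<forall>w\<in>U. ((\<lambda>t. pd2 X (t, snd w) $ k) has_real_derivative pd1 (pd2 X) w $ k) (at (fst w))"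
      using C by (auto intro!: vec_comp_deriv hvd1)
    show "continuous_on U (\<lambda>w. pd2 (pd1 X) w $ k)" "continuous_on U (\<lambda>w. pd1 (pd2 X) w $ k)"
      using C by (auto intro!: continuous_on_component)
  qed
  thus ?thesis unfolding z by (simp add: vec_eq_iff)
qed

lemma LAPV_lin:
  "LAPV a b a1 b1 a2 b2 (p + c*p') (q + c*q') (p1 + c*p1') (q1 + c*q1') (p2 + c*p2') (q2 + c*q2')
   = LAPV a b a1 b1 a2 b2 p q p1 q1 p2 q2 + c * LAPV a b a1 b1 a2 b2 p' q' p1' q1' p2' q2'"
proof -
  define E where "E = a\<bullet>a"
  define F where "F = a\<bullet>b"
  define G where "G = b\<bullet>b"
  define la where "la = LA a b a1 b1 a2 b2"
  define lb where "lb = LB a b a1 b1 a2 b2"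
  define D where "D = E*G - F^2"
  show ?thesis unfolding LAPV_split E_def[symmetric] F_def[symmetric] G_def[symmetric] la_def[symmetric] lb_def[symmetric]
      D_def[symmetric]
    by (cases "D = 0") (simp_all add: field_simps)
qed

lemma LAPV_sym_scale:
  "LAPV a b a1 b1 a2 b2 (c*p) (c*q) (c*p1) (c*q1) (c*p2) (c*q2) = c * LAPV a b a1 b1 a2 b2 p q p1 q1 p2 q2"
  using LAPV_lin[of a b a1 b1 a2 b2 0 c p 0 q 0 p1 0 q1 0 p2 0 q2]
  by (simp add: LAPV_split)

lemma trace_le:
  fixes E F G D p1 q1 p2 q2 :: real
  assumes "E > 0" "D = E*G - F^2" "D > 0"
    and Q: "\<And>v1 v2. v1 * (v1 * p1 + v2 * p2) + v2 * (v1 * q1 + v2 * q2) \<le> 0"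
  shows "(G*p1 - F*(q1+p2) + E*q2) / D \<le> 0"
proof -
  have "E * (G*p1 - F*(q1+p2) + E*q2) = D * (1 * (1 * p1 + 0 * p2) + 0 * (1 * q1 + 0 * q2))
        + (F * (F * p1 + (-E) * p2) + (-E) * (F * q1 + (-E) * q2))"
    unfolding assms(2) by (simp add: algebra_simps power2_eq_square)
  also have "\<dots> \<le> 0" using Q[of 1 0] Q[of F "-E"] assms(3)
    by (smt (verit) mult_nonneg_nonpos)
  finally have "E * (G*p1 - F*(q1+p2) + E*q2) \<le> 0" .
  hence "G*p1 - F*(q1+p2) + E*q2 \<le> 0" using assms(1) by (simp add: mult_le_0_iff)
  thus ?thesis using assms(3) by (simp add: divide_nonpos_pos)
qed

lemma posdef:
  fixes E F G D u1 u2 :: real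
  assumes "E > 0" "D = E*G - F^2" "D > 0"
  shows "G*u1*u1 - 2*F*u1*u2 + E*u2*u2 \<ge> 0"
proof -
  have "E * (G*u1*u1 - 2*F*u1*u2 + E*u2*u2) = (E*u2 - F*u1)^2 + D*u1^2"
    unfolding assms(2) by (simp add: algebra_simps power2_eq_square)
  also have "\<dots> \<ge> 0" using assms(3) by simp
  finally show ?thesis using assms(1) by (simp add: zero_le_mult_iff)
qed

locale Gfun =
  fixes G :: "real \<Rightarrow> real" and DG :: "nat \<Rightarrow> real \<Rightarrow> real"
  assumes G_smooth: "smooth_on_halfline G DG"
    and G0: "G 0 > 0"
    and G_mono: "\<forall>t\<ge>0. DG 1 t \<ge> 0"
begin

lemma DG0_eq: "t \<ge> 0 \<Longrightarrow> DG 0 t = G t"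
  using G_smooth unfolding smooth_on_halfline_def by auto

lemma DG_within: "t \<ge> 0 \<Longrightarrow> (DG k has_real_derivative DG (Suc k) t) (at t within {0..})"
  using G_smooth unfolding smooth_on_halfline_def by auto

lemma int_Ici0: "interior {0::real..} = {0<..}" by (rule interior_Ici[of "-1"]) simp

lemma DG_at: "t > 0 \<Longrightarrow> (DG k has_real_derivative DG (Suc k) t) (at t)"
  using DG_within[of t k] at_within_interior[of t "{0..}"] by (simp add: int_Ici0)

lemma G_at: "t > 0 \<Longrightarrow> (G has_real_derivative DG 1 t) (at t)"
  using has_field_derivative_transform_within_open[OF DG_at[of t 0], of "{0<..}" G] DG0_eq by auto

lemma DG1_cont: "t > 0 \<Longrightarrow> isCont (DG 1) t"
  using DG_at[of t 1] by (rule DERIV_isCont)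

lemma G_cont: "continuous_on {0..} G"
proof -
  have "continuous_on {0..} (DG 0)"
    unfolding continuous_on_eq_continuous_within
  proof
    fix t :: real assume "t \<in> {0..}"
    thus "continuous (at t within {0..}) (DG 0)" using DERIV_continuous[OF DG_within[of t 0]] by simp
  qed
  thus ?thesis by (rule continuous_on_eq) (simp add: DG0_eq)
qed

lemma G_incr: assumes "0 \<le> s" "s \<le> t" shows "G s \<le> G t"
proof (rule DERIV_nonneg_imp_increasing_open[OF assms(2)])
  fix x assume "s < x" "x < t"
  hence "x > 0" "x \<ge> 0" using assms by auto
  thus "\<exists>y. (G has_real_derivative y) (at x) \<and> 0 \<le> y" using G_at[of x] G_mono by blast
next
  show "continuous_on {s..t} G" using G_cont by (rule continuous_on_subset) (use assms in auto)
qed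

lemma G_ge0: "t \<ge> 0 \<Longrightarrow> G t \<ge> G 0" using G_incr[of 0 t] by simp
lemma G_gt0: "t \<ge> 0 \<Longrightarrow> G t > 0" using G_ge0[of t] G0 by linarith
lemmas G_pos = G_ge0 G_gt0

definition gg :: "real \<Rightarrow> real" where "gg t = 1 / sqrt (G t)"
definition gg' :: "real \<Rightarrow> real" where "gg' t = - DG 1 t / (2 * G t * sqrt (G t))"

lemma gg_cont: "continuous_on {0..} gg"
proof -
  have "\<forall>t\<in>{0..}. sqrt (G t) \<noteq> 0" using G_pos(2) by (auto simp: less_le)
  thus ?thesis unfolding gg_def by (intro continuous_on_divide continuous_on_const continuous_on_compose2[OF continuous_on_real_sqrt G_cont]) auto
qed

lemma gg_int: "gg integrable_on {0..r}"
  by (rule integrable_continuous_real, rule continuous_on_subset[OF gg_cont]) auto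

lemma gg_pos: "t \<ge> 0 \<Longrightarrow> gg t > 0"
  unfolding gg_def using G_pos(2) by simp

lemma gg_deriv: "t > 0 \<Longrightarrow> (gg has_real_derivative gg' t) (at t)"
proof -
  assume t: "t > 0"
  have Gt: "G t > 0" using G_pos(2) t by simp
  have sq: "((\<lambda>x. sqrt (G x)) has_real_derivative inverse (sqrt (G t)) / 2 * DG 1 t) (at t)"
    using DERIV_chain2[OF DERIV_real_sqrt[OF Gt] G_at[OF t]] .
  have "((\<lambda>x. inverse (sqrt (G x))) has_real_derivative
      - (inverse (sqrt (G t)) / 2 * DG 1 t * inverse (sqrt (G t) ^ Suc (Suc 0)))) (at t)"
    by (rule DERIV_inverse_fun[OF sq]) (use Gt in simp)
  moreover have "- (inverse (sqrt (G t)) / 2 * DG 1 t * inverse (sqrt (G t) ^ Suc (Suc 0))) = gg' t"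
    using Gt unfolding gg'_def by (simp add: field_simps)
  moreover have "gg = (\<lambda>x. inverse (sqrt (G x)))" unfolding gg_def by (simp add: inverse_eq_divide)
  ultimately show ?thesis by simp
qed

lemma gg'_cont: "t > 0 \<Longrightarrow> isCont gg' t"
  unfolding gg'_def using G_pos(2)[of t] DERIV_isCont[OF G_at, of t] DG1_cont[of t]
  by (intro continuous_intros) auto

lemma gg'_nonpos: "t > 0 \<Longrightarrow> gg' t \<le> 0"
  unfolding gg'_def using G_pos(2)[of t] G_mono by (simp add: divide_nonneg_pos)

definition Phi :: "real \<Rightarrow> real" where "Phi r = integral {0..r} gg"

lemma Phi_deriv: "r > 0 \<Longrightarrow> (Phi has_real_derivative gg r) (at r)"
proof -
  assume r: "r > 0"
  have "((\<lambda>x. integral {0..x} gg) has_real_derivative gg r) (at r within {0..r+1})"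
    by (rule integral_has_real_derivative) (use r gg_cont in \<open>auto intro: continuous_on_subset\<close>)
  moreover have "at r within {0..r+1} = at r"
    using r by (intro at_within_interior) auto
  ultimately show ?thesis unfolding Phi_def[abs_def] by simp
qed

lemma Phi_nonneg: "r \<ge> 0 \<Longrightarrow> Phi r \<ge> 0"
  unfolding Phi_def using gg_pos gg_int by (intro integral_nonneg) (auto intro: less_imp_le)

lemma Phi_mono: assumes "0 \<le> r" "r \<le> r'" shows "Phi r \<le> Phi r'"
proof -
  have "integral {0..r} gg \<le> integral {0..r'} gg"
    using assms gg_pos gg_int
    by (intro integral_subset_le) (auto intro: less_imp_le)
  thus ?thesis unfolding Phi_def .
qed

lemma Phi_unbounded:
  assumes nonint: "\<not> set_integrable lborel {0::real..} (\<lambda>t. 1 / sqrt (G t))"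
  shows "\<exists>r\<ge>0. Phi r > c"
proof (rule ccontr)
  assume "\<not> ?thesis"
  hence B: "\<And>r. r \<ge> 0 \<Longrightarrow> Phi r \<le> c" by (simp add: not_less)
  have inc: "incseq (\<lambda>i::nat. Phi (real i))" by (rule incseq_SucI) (simp add: Phi_mono)
  have "\<forall>i. Phi (real i) \<le> c" using B by simp
  then obtain L where L: "(\<lambda>i::nat. Phi (real i)) \<longlonglongrightarrow> L" using incseq_convergent[OF inc] by blast
  have si: "set_integrable lborel {0..real i} gg" for i
    unfolding set_integrable_def
    by (rule borel_integrable_compact) (auto intro: continuous_on_subset[OF gg_cont])
  have "set_integrable lborel (\<Union>i::nat. {0..real i}) gg"
  proof (rule pos_integrable_to_top)
    show "mono (\<lambda>i::nat. {0..real i})" by (auto simp: mono_def)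
    show "\<And>x i. x \<in> {0..real i} \<Longrightarrow> 0 \<le> gg x" using gg_pos by (auto intro: less_imp_le)
    show "\<And>i. set_integrable lborel {0..real i} gg" by (rule si)
    have "(LINT x:{0..real i}|lborel. gg x) = Phi (real i)" for i
      using set_borel_integral_eq_integral(2)[OF si] unfolding Phi_def by simp
    thus "(\<lambda>i. LINT x:{0..real i}|lborel. gg x) \<longlonglongrightarrow> L" using L by simp
  qed auto
  moreover have "(\<Union>i::nat. {0..real i}) = {0..}"
    by (auto simp: real_arch_simple)
  ultimately have "set_integrable lborel {0..} gg" by simp
  thus False using nonint unfolding gg_def[abs_def] by simp
qed

definition Psi :: "real \<Rightarrow> real" where "Psi s = Phi (sqrt s)"
definition Psi1 :: "real \<Rightarrow> real" where "Psi1 s = gg (sqrt s) / (2 * sqrt s)"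
definition Psi2 :: "real \<Rightarrow> real" where
  "Psi2 s = gg' (sqrt s) / (4 * s) - gg (sqrt s) / (4 * s * sqrt s)"

lemma Psi_d1: "s > 0 \<Longrightarrow> (Psi has_real_derivative Psi1 s) (at s)"
proof -
  assume s: "s > 0"
  have "((\<lambda>x. Phi (sqrt x)) has_real_derivative gg (sqrt s) * (inverse (sqrt s) / 2)) (at s)"
    using DERIV_chain2[OF Phi_deriv DERIV_real_sqrt[OF s]] s by simp
  moreover have "gg (sqrt s) * (inverse (sqrt s) / 2) = Psi1 s" unfolding Psi1_def by (simp add: field_simps)
  ultimately show ?thesis unfolding Psi_def[abs_def] by simp
qed

lemma Psi_d2: "s > 0 \<Longrightarrow> (Psi1 has_real_derivative Psi2 s) (at s)"
proof -
  assume s: "s > 0"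
  have sq: "sqrt s > 0" using s by simp
  have g1: "((\<lambda>x. gg (sqrt x)) has_real_derivative gg' (sqrt s) * (inverse (sqrt s) / 2)) (at s)"
    using DERIV_chain2[OF gg_deriv[OF sq] DERIV_real_sqrt[OF s]] .
  have g2: "((\<lambda>x. 2 * sqrt x) has_real_derivative 2 * (inverse (sqrt s) / 2)) (at s)"
    using DERIV_cmult[OF DERIV_real_sqrt[OF s], of 2] .
  have "((\<lambda>x. gg (sqrt x) / (2 * sqrt x)) has_real_derivative
      (gg' (sqrt s) * (inverse (sqrt s) / 2) * (2 * sqrt s) - gg (sqrt s) * (2 * (inverse (sqrt s) / 2))) / (2 * sqrt s * (2 * sqrt s))) (at s)"
    by (rule DERIV_divide[OF g1 g2]) (use sq in simp)
  moreover have "(gg' (sqrt s) * (inverse (sqrt s) / 2) * (2 * sqrt s) - gg (sqrt s) * (2 * (inverse (sqrt s) / 2))) / (2 * sqrt s * (2 * sqrt s)) = Psi2 s"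
  proof -
    have ss: "sqrt s * sqrt s = s" using s by simp
    show ?thesis unfolding Psi2_def using sq s ss by (simp add: field_simps)
  qed
  ultimately show ?thesis unfolding Psi1_def[abs_def] by simp
qed

lemma Psi2_cont: "continuous_on {0<..} Psi2"
proof -
  have "isCont Psi2 s" if s: "s > 0" for s
  proof -
    have sq: "sqrt s > 0" using s by simp
    have c1: "isCont (\<lambda>x. gg' (sqrt x)) s" by (rule continuous_at_compose[OF DERIV_isCont[OF DERIV_real_sqrt[OF s]] gg'_cont[OF sq], unfolded o_def])
    have c2: "isCont (\<lambda>x. gg (sqrt x)) s" by (rule continuous_at_compose[OF DERIV_isCont[OF DERIV_real_sqrt[OF s]] DERIV_isCont[OF gg_deriv[OF sq]], unfolded o_def])
    show ?thesis unfolding Psi2_def[abs_def] using s sq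
      by (intro continuous_intros c1 c2) auto
  qed
  thus ?thesis by (intro continuous_at_imp_continuous_on) auto
qed

lemma Psi2_nonpos: "s > 0 \<Longrightarrow> Psi2 s \<le> 0"
  unfolding Psi2_def using gg'_nonpos[of "sqrt s"] gg_pos[of "sqrt s"]
  by (simp add: divide_nonpos_pos divide_nonneg_pos diff_le_0_iff_le) (smt (verit) divide_nonneg_pos divide_nonpos_pos mult_pos_pos real_sqrt_gt_0_iff zero_less_mult_iff)

lemma Psi1_pos: "s > 0 \<Longrightarrow> Psi1 s > 0"
  unfolding Psi1_def using gg_pos[of "sqrt s"] by simp

lemma Psi_nonneg: "s \<ge> 0 \<Longrightarrow> Psi s \<ge> 0"
  unfolding Psi_def by (rule Phi_nonneg) simp

lemma Psi_unbounded:
  assumes nonint: "\<not> set_integrable lborel {0::real..} (\<lambda>t. 1 / sqrt (G t))"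
  shows "\<exists>s\<ge>1. Psi s > c"
proof -
  obtain r where r: "r \<ge> 0" "Phi r > c" using Phi_unbounded[OF nonint] by blast
  define r' where "r' = max r 1"
  have "Phi r' > c" using Phi_mono[of r r'] r by (simp add: r'_def)
  moreover have "sqrt (r'^2) = r'" by (simp add: r'_def)
  ultimately have "Psi (r'^2) > c" unfolding Psi_def by simp
  moreover have "r'^2 \<ge> 1" by (simp add: r'_def one_le_power)
  ultimately show ?thesis by blast
qed

lemma Psi_mono: "0 \<le> s \<Longrightarrow> s \<le> s' \<Longrightarrow> Psi s \<le> Psi s'"
  unfolding Psi_def by (intro Phi_mono) auto

lemma Psi1_grad: "s > 0 \<Longrightarrow> 4 * s * (Psi1 s)^2 = 1 / G (sqrt s)"
  unfolding Psi1_def gg_def using G_pos(2)[of "sqrt s"] by (simp add: field_simps power2_eq_square)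

lemma Psi1_gg: "s > 0 \<Longrightarrow> Psi1 s * (2 * sqrt s) = gg (sqrt s)"
  unfolding Psi1_def by simp

end

lemma LAPV_chain:
  "LAPV a b a1 b1 a2 b2 (k1*u1) (k1*u2) (k2*u1*u1 + k1*u11) (k2*u1*u2 + k1*u21) (k2*u2*u1 + k1*u12) (k2*u2*u2 + k1*u22)
   = k2 * ((b\<bullet>b)*u1*u1 - 2*(a\<bullet>b)*u1*u2 + (a\<bullet>a)*u2*u2) / ((a\<bullet>a)*(b\<bullet>b) - (a\<bullet>b)^2)
     + k1 * LAPV a b a1 b1 a2 b2 u1 u2 u11 u21 u12 u22"
proof -
  define E where "E = a\<bullet>a"
  define F where "F = a\<bullet>b"
  define G where "G = b\<bullet>b"
  define la where "la = LA a b a1 b1 a2 b2"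
  define lb where "lb = LB a b a1 b1 a2 b2"
  define D where "D = E*G - F^2"
  show ?thesis unfolding LAPV_split E_def[symmetric] F_def[symmetric] G_def[symmetric] la_def[symmetric] lb_def[symmetric]
      D_def[symmetric]
    by (cases "D = 0") (simp_all add: field_simps)
qed

lemma LAPV_s:
  assumes nz: "cross3 a b \<noteq> 0"
  shows "LAPV a b a1 b1 b1 b2 (2*(v\<bullet>a)) (2*(v\<bullet>b)) (2*(a\<bullet>a + v\<bullet>a1)) (2*(a\<bullet>b + v\<bullet>b1)) (2*(b\<bullet>a + v\<bullet>b1)) (2*(b\<bullet>b + v\<bullet>b2))
    = 4 + 2 * (v \<bullet> Tv a b a1 b1 b1 b2)"
proof -
  have D: "(a\<bullet>a)*(b\<bullet>b) - (a\<bullet>b)^2 \<noteq> 0" using nz nn_gdet[of a b] by auto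
  have "LAPV a b a1 b1 b1 b2 (2*(v\<bullet>a)) (2*(v\<bullet>b)) (2*(a\<bullet>a + v\<bullet>a1)) (2*(a\<bullet>b + v\<bullet>b1)) (2*(b\<bullet>a + v\<bullet>b1)) (2*(b\<bullet>b + v\<bullet>b2))
    = LAPV a b a1 b1 b1 b2 (0 + 2*(v\<bullet>a)) (0 + 2*(v\<bullet>b)) (2*(a\<bullet>a) + 2*(v\<bullet>a1)) (2*(a\<bullet>b) + 2*(v\<bullet>b1)) (2*(b\<bullet>a) + 2*(v\<bullet>b1)) (2*(b\<bullet>b) + 2*(v\<bullet>b2))"
    by (simp add: distrib_left)
  also have "\<dots> = LAPV a b a1 b1 b1 b2 0 0 (2*(a\<bullet>a)) (2*(a\<bullet>b)) (2*(b\<bullet>a)) (2*(b\<bullet>b))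
      + 2 * LAPV a b a1 b1 b1 b2 (v\<bullet>a) (v\<bullet>b) (v\<bullet>a1) (v\<bullet>b1) (v\<bullet>b1) (v\<bullet>b2)"
    by (rule LAPV_lin)
  also have "LAPV a b a1 b1 b1 b2 0 0 (2*(a\<bullet>a)) (2*(a\<bullet>b)) (2*(b\<bullet>a)) (2*(b\<bullet>b)) = 4"
    unfolding LAPV_split using D by (simp add: inner_commute[of b a] field_simps power2_eq_square)
  finally show ?thesis by (simp add: LAPV_inner)
qed

lemma e3_deriv:
  fixes A :: "real \<Rightarrow> real^3"
  assumes "(A has_vector_derivative a) (at t)"
  shows "((\<lambda>s. A s \<bullet> e3) has_real_derivative a \<bullet> e3) (at t)"
proof -
  have "((\<lambda>s. A s \<bullet> e3) has_derivative (\<lambda>h. (h *\<^sub>R a) \<bullet> e3)) (at t)"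
    using bounded_linear.has_derivative[OF bounded_linear_inner_left assms[unfolded has_vector_derivative_def]] .
  moreover have "(\<lambda>h. (h *\<^sub>R a) \<bullet> e3) = (*) (a \<bullet> e3)" by (rule ext) simp
  ultimately show ?thesis unfolding has_field_derivative_def by simp
qed


lemma local_main:
  fixes X :: "R2 \<Rightarrow> real^3" and f :: "R2 \<Rightarrow> real" and \<Psi> \<Psi>1 \<Psi>2 \<phi> :: "real \<Rightarrow> real"
  assumes U: "open U" "z \<in> U"
    and CX: "Ck 2 U X" and nz: "cross3 (pd1 X z) (pd2 X z) \<noteq> 0"
    and Cf: "Ck 2 U f"
    and d1: "\<And>s. s > 0 \<Longrightarrow> (\<Psi> has_real_derivative \<Psi>1 s) (at s)"
    and d2: "\<And>s. s > 0 \<Longrightarrow> (\<Psi>1 has_real_derivative \<Psi>2 s) (at s)"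
    and c2: "continuous_on {0<..} \<Psi>2"
    and neg: "\<Psi>2 (1 + X z \<bullet> X z) \<le> 0"
    and eps: "\<epsilon> > 0"
    and mx: "\<forall>w\<in>U. f w - \<epsilon> * \<Psi> (1 + X w \<bullet> X w) \<le> f z - \<epsilon> * \<Psi> (1 + X z \<bullet> X z)"
    and mc: "meancurv_loc X z = (c * (normal_loc X z \<bullet> e3)) *\<^sub>R normal_loc X z"
    and dphi: "(\<phi> has_real_derivative c) (at (X z \<bullet> e3))"
  shows "grad_inner_loc X f f z \<le> \<epsilon>^2 * (\<Psi>1 (1 + X z \<bullet> X z))^2 * (4 * (X z \<bullet> X z))"
    and "lap_loc X f z + grad_inner_loc X (\<lambda>w. \<phi> (X w \<bullet> e3)) f z
           \<le> \<epsilon> * \<Psi>1 (1 + X z \<bullet> X z) * (4 + 2 * c * (X z \<bullet> e3))"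
proof -
  obtain x y where z: "z = (x, y)" by (cases z)
  define a where "a = pd1 X z"
  define b where "b = pd2 X z"
  define a1 where "a1 = pd1 (pd1 X) z"
  define b1 where "b1 = pd1 (pd2 X) z"
  define b2 where "b2 = pd2 (pd2 X) z"
  have sym: "pd2 (pd1 X) z = b1" unfolding b1_def by (rule schwarz_vec[OF CX U(1) U(2)])
  define n where "n = cross3 a b"
  have nz': "n \<noteq> 0" using nz unfolding n_def a_def b_def .
  define E where "E = a\<bullet>a"
  define Fm where "Fm = a\<bullet>b"
  define Gm where "Gm = b\<bullet>b"
  define D where "D = E*Gm - Fm^2"
  have nnD: "n \<bullet> n = D" unfolding n_def D_def E_def Fm_def Gm_def by (rule nn_gdet)
  have Dpos: "D > 0" using nnD nz' by (metis inner_gt_zero_iff)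
  have Epos: "E > 0" using nz' unfolding E_def n_def by (metis cross_zero_left inner_gt_zero_iff)
  have gdetz: "gdet X z = D" unfolding gdet_def g11_def g22_def g12_def D_def E_def Fm_def Gm_def a_def b_def by simp
  define Xz where "Xz = X z"
  define \<sigma> where "\<sigma> = 1 + Xz \<bullet> Xz"
  have \<sigma>pos: "\<sigma> > 0" unfolding \<sigma>_def by (simp add: add_pos_nonneg)
  define S where "S = (\<lambda>w. 1 + X w \<bullet> X w)"
  define s1 where "s1 = (\<lambda>w. 2 * (X w \<bullet> pd1 X w))"
  define s2 where "s2 = (\<lambda>w. 2 * (X w \<bullet> pd2 X w))"
  define s11 where "s11 = (\<lambda>w. 2 * (pd1 X w \<bullet> pd1 X w + X w \<bullet> pd1 (pd1 X) w))"
  define s12 where "s12 = (\<lambda>w. 2 * (pd2 X w \<bullet> pd1 X w + X w \<bullet> pd2 (pd1 X) w))"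
  define s21 where "s21 = (\<lambda>w. 2 * (pd1 X w \<bullet> pd2 X w + X w \<bullet> pd1 (pd2 X) w))"
  define s22 where "s22 = (\<lambda>w. 2 * (pd2 X w \<bullet> pd2 X w + X w \<bullet> pd2 (pd2 X) w))"
  have JS: "J2 U S s1 s2 s11 s12 s21 s22"
    unfolding S_def s1_def s2_def s11_def s12_def s21_def s22_def by (rule J2_sq[OF CX])
  have SV: "S ` U \<subseteq> {0<..}" unfolding S_def by (auto simp: add_pos_nonneg)
  define P1 where "P1 = (\<lambda>w. \<Psi>1 (S w) * s1 w)"
  define P2 where "P2 = (\<lambda>w. \<Psi>1 (S w) * s2 w)"
  define P11 where "P11 = (\<lambda>w. \<Psi>2 (S w) * s1 w * s1 w + \<Psi>1 (S w) * s11 w)"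
  define P12 where "P12 = (\<lambda>w. \<Psi>2 (S w) * s2 w * s1 w + \<Psi>1 (S w) * s12 w)"
  define P21 where "P21 = (\<lambda>w. \<Psi>2 (S w) * s1 w * s2 w + \<Psi>1 (S w) * s21 w)"
  define P22 where "P22 = (\<lambda>w. \<Psi>2 (S w) * s2 w * s2 w + \<Psi>1 (S w) * s22 w)"
  have JP: "J2 U (\<lambda>w. \<Psi> (S w)) P1 P2 P11 P12 P21 P22"
    unfolding P1_def P2_def P11_def P12_def P21_def P22_def
    by (rule J2_comp[OF JS _ SV d1 d2 c2]) auto
  have Jf: "J2 U f (pd1 f) (pd2 f) (pd1 (pd1 f)) (pd2 (pd1 f)) (pd1 (pd2 f)) (pd2 (pd2 f))"
    by (rule J2_Ck[OF Cf])
  have Jm: "J2 U (\<lambda>w. f w - \<epsilon> * \<Psi> (S w)) (\<lambda>w. pd1 f w - \<epsilon> * P1 w) (\<lambda>w. pd2 f w - \<epsilon> * P2 w)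
     (\<lambda>w. pd1 (pd1 f) w - \<epsilon> * P11 w) (\<lambda>w. pd2 (pd1 f) w - \<epsilon> * P12 w)
     (\<lambda>w. pd1 (pd2 f) w - \<epsilon> * P21 w) (\<lambda>w. pd2 (pd2 f) w - \<epsilon> * P22 w)"
    by (rule J2_diff[OF Jf J2_cmult[OF JP]])
  note Jm' = Jm[unfolded J2_def hd1_def hd2_def]
  have mx': "\<forall>w\<in>U. (\<lambda>w. f w - \<epsilon> * \<Psi> (S w)) w \<le> (\<lambda>w. f w - \<epsilon> * \<Psi> (S w)) (x, y)"
    using mx unfolding S_def z by simp
  have Uxy: "(x, y) \<in> U" using U z by simp
  note MS = max_second[OF U(1) Uxy mx', of "\<lambda>w. pd1 f w - \<epsilon> * P1 w" "\<lambda>w. pd2 f w - \<epsilon> * P2 w"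
     "\<lambda>w. pd1 (pd1 f) w - \<epsilon> * P11 w" "\<lambda>w. pd2 (pd1 f) w - \<epsilon> * P12 w"
     "\<lambda>w. pd1 (pd2 f) w - \<epsilon> * P21 w" "\<lambda>w. pd2 (pd2 f) w - \<epsilon> * P22 w"]
  have M1: "pd1 f z - \<epsilon> * P1 z = 0" and M2: "pd2 f z - \<epsilon> * P2 z = 0"
    and MQ: "\<And>v1 v2. v1 * (v1 * (pd1 (pd1 f) z - \<epsilon> * P11 z) + v2 * (pd2 (pd1 f) z - \<epsilon> * P12 z))
       + v2 * (v1 * (pd1 (pd2 f) z - \<epsilon> * P21 z) + v2 * (pd2 (pd2 f) z - \<epsilon> * P22 z)) \<le> 0"
    using MS Jm' unfolding z by auto
  have Sz: "S z = \<sigma>" unfolding S_def \<sigma>_def Xz_def ..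
  have s1z: "s1 z = 2 * (Xz \<bullet> a)" unfolding s1_def Xz_def a_def ..
  have s2z: "s2 z = 2 * (Xz \<bullet> b)" unfolding s2_def Xz_def b_def ..
  have s11z: "s11 z = 2 * (a \<bullet> a + Xz \<bullet> a1)" unfolding s11_def Xz_def a_def a1_def ..
  have s12z: "s12 z = 2 * (b \<bullet> a + Xz \<bullet> b1)" unfolding s12_def Xz_def a_def b_def sym ..
  have s21z: "s21 z = 2 * (a \<bullet> b + Xz \<bullet> b1)" unfolding s21_def Xz_def a_def b_def b1_def ..
  have s22z: "s22 z = 2 * (b \<bullet> b + Xz \<bullet> b2)" unfolding s22_def Xz_def b_def b2_def ..
  define pf where "pf = pd1 f z"
  define qf where "qf = pd2 f z"
  define p1 where "p1 = pd1 (pd1 f) z"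
  define q1 where "q1 = pd1 (pd2 f) z"
  define p2 where "p2 = pd2 (pd1 f) z"
  define q2 where "q2 = pd2 (pd2 f) z"
  define k1 where "k1 = \<Psi>1 \<sigma>"
  define k2 where "k2 = \<Psi>2 \<sigma>"
  have pf: "pf = \<epsilon> * (k1 * (2 * (Xz \<bullet> a)))" using M1 unfolding pf_def P1_def Sz s1z k1_def by simp
  have qf: "qf = \<epsilon> * (k1 * (2 * (Xz \<bullet> b)))" using M2 unfolding qf_def P2_def Sz s2z k1_def by simp
  note CX' = CX[unfolded Ck2_unfold]
  note Jf' = Jf[unfolded J2_def hd1_def hd2_def]
  have hX11: "((\<lambda>t. pd1 X (t, y)) has_vector_derivative a1) (at x)"
    using hvd1[of "pd1 X" z] CX' U unfolding a1_def z by auto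
  have hX21: "((\<lambda>t. pd2 X (t, y)) has_vector_derivative b1) (at x)"
    using hvd1[of "pd2 X" z] CX' U unfolding b1_def z by auto
  have hX12: "((\<lambda>t. pd1 X (x, t)) has_vector_derivative b1) (at y)"
    using hvd2[of "pd1 X" z] CX' U sym unfolding z by auto
  have hX22: "((\<lambda>t. pd2 X (x, t)) has_vector_derivative b2) (at y)"
    using hvd2[of "pd2 X" z] CX' U unfolding b2_def z by auto
  have hf11: "((\<lambda>t. pd1 f (t, y)) has_real_derivative p1) (at x)" using Jf' U unfolding p1_def z by auto
  have hf21: "((\<lambda>t. pd2 f (t, y)) has_real_derivative q1) (at x)" using Jf' U unfolding q1_def z by auto
  have hf12: "((\<lambda>t. pd1 f (x, t)) has_real_derivative p2) (at y)" using Jf' U unfolding p2_def z by auto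
  have hf22: "((\<lambda>t. pd2 f (x, t)) has_real_derivative q2) (at y)" using Jf' U unfolding q2_def z by auto
  have lapf: "lap_loc X f z = LAPV a b a1 b1 b1 b2 pf qf p1 q1 p2 q2"
    using lap_loc_LAPV[OF hX11 hX21 hX12 hX22 hf11 hf21 hf12 hf22] gdetz Dpos
    unfolding z a_def b_def pf_def qf_def z by simp
  define m11 where "m11 = p1 - \<epsilon> * P11 z"
  define m12 where "m12 = p2 - \<epsilon> * P12 z"
  define m21 where "m21 = q1 - \<epsilon> * P21 z"
  define m22 where "m22 = q2 - \<epsilon> * P22 z"
  have split: "LAPV a b a1 b1 b1 b2 pf qf p1 q1 p2 q2 =
      LAPV a b a1 b1 b1 b2 (pf - \<epsilon> * P1 z) (qf - \<epsilon> * P2 z) m11 m21 m12 m22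
      + \<epsilon> * LAPV a b a1 b1 b1 b2 (P1 z) (P2 z) (P11 z) (P21 z) (P12 z) (P22 z)"
    using LAPV_lin[of a b a1 b1 b1 b2 "pf - \<epsilon> * P1 z" \<epsilon> "P1 z" "qf - \<epsilon> * P2 z" "P2 z" m11 "P11 z"
        m21 "P21 z" m12 "P12 z" m22 "P22 z"]
    unfolding m11_def m12_def m21_def m22_def by simp
  have mpart: "LAPV a b a1 b1 b1 b2 (pf - \<epsilon> * P1 z) (qf - \<epsilon> * P2 z) m11 m21 m12 m22 \<le> 0"
  proof -
    have "LAPV a b a1 b1 b1 b2 (pf - \<epsilon> * P1 z) (qf - \<epsilon> * P2 z) m11 m21 m12 m22
        = (Gm*m11 - Fm*(m21+m12) + E*m22) / D"
      unfolding LAPV_split using M1 M2 unfolding pf_def qf_def D_def E_def Fm_def Gm_def by simp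
    also have "\<dots> \<le> 0"
      by (rule trace_le[OF Epos D_def Dpos]) (use MQ in \<open>simp add: m11_def m12_def m21_def m22_def p1_def p2_def q1_def q2_def\<close>)
    finally show ?thesis .
  qed
  define Q where "Q = Gm * s1 z * s1 z - 2 * Fm * s1 z * s2 z + E * s2 z * s2 z"
  have Qnn: "Q \<ge> 0" unfolding Q_def by (rule posdef[OF Epos D_def Dpos])
  have Ppart: "LAPV a b a1 b1 b1 b2 (P1 z) (P2 z) (P11 z) (P21 z) (P12 z) (P22 z)
      = k2 * Q / D + k1 * (4 + 2 * (Xz \<bullet> Tv a b a1 b1 b1 b2))"
  proof -
    have "LAPV a b a1 b1 b1 b2 (P1 z) (P2 z) (P11 z) (P21 z) (P12 z) (P22 z)
        = k2 * Q / D + k1 * LAPV a b a1 b1 b1 b2 (s1 z) (s2 z) (s11 z) (s21 z) (s12 z) (s22 z)"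
      unfolding P1_def P2_def P11_def P12_def P21_def P22_def Sz k1_def[symmetric] k2_def[symmetric]
        Q_def D_def E_def Fm_def Gm_def
      by (rule LAPV_chain)
    also have "LAPV a b a1 b1 b1 b2 (s1 z) (s2 z) (s11 z) (s21 z) (s12 z) (s22 z) = 4 + 2 * (Xz \<bullet> Tv a b a1 b1 b1 b2)"
      unfolding s1z s2z s11z s12z s21z s22z using LAPV_s[OF nz'[unfolded n_def]] by simp
    finally show ?thesis .
  qed
  define N where "N = (1 / norm n) *\<^sub>R n"
  have nN: "normal_loc X z = N" unfolding normal_loc_def N_def n_def a_def b_def ..
  have TvH: "Tv a b a1 b1 b1 b2 = meancurv_loc X z"
  proof -
    have "Tv a b a1 b1 b1 b2 = ((b\<bullet>b)/D * (a1 \<bullet> N) + (- (a\<bullet>b))/D * (b1 \<bullet> N) + (- (a\<bullet>b))/D * (b1 \<bullet> N) + (a\<bullet>a)/D * (b2 \<bullet> N)) *\<^sub>R N"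
      using Tv_mc[OF nz'[unfolded n_def], of a1 b1 b2] unfolding N_def n_def D_def E_def Fm_def Gm_def by simp
    also have "\<dots> = meancurv_loc X z"
      unfolding meancurv_loc_def nN ginv11_def ginv12_def ginv22_def gdetz sym
      unfolding g11_def g12_def g22_def a_def[symmetric] b_def[symmetric] a1_def[symmetric] b1_def[symmetric] b2_def[symmetric]
      by simp
    finally show ?thesis .
  qed
  have nn2: "norm n ^ 2 = D" using nnD by (simp add: power2_norm_eq_inner)
  have nrm: "norm n > 0" using nz' by simp
  have XH: "Xz \<bullet> Tv a b a1 b1 b1 b2 = c * (n \<bullet> e3) * (Xz \<bullet> n) / D"
    unfolding TvH mc nN N_def using nrm nn2 by (simp add: inner_scaleR_right inner_commute[of e3] field_simps power2_eq_square)
  have X1: "((\<lambda>t. X (t, y)) has_vector_derivative a) (at x)"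
    using hvd1[of X z] CX' U unfolding a_def z by auto
  have X2: "((\<lambda>t. X (x, t)) has_vector_derivative b) (at y)"
    using hvd2[of X z] CX' U unfolding b_def z by auto
  have dphi': "(\<phi> has_real_derivative c) (at (X (x, y) \<bullet> e3))" using dphi unfolding z .
  have ph1: "pd1 (\<lambda>w. \<phi> (X w \<bullet> e3)) z = c * (a \<bullet> e3)"
    unfolding z by (rule pd1_at, rule DERIV_chain2[OF dphi' e3_deriv[OF X1]])
  have ph2: "pd2 (\<lambda>w. \<phi> (X w \<bullet> e3)) z = c * (b \<bullet> e3)"
    unfolding z by (rule pd2_at, rule DERIV_chain2[OF dphi' e3_deriv[OF X2]])
  have ginv: "ginv11 X z = Gm / D" "ginv12 X z = - Fm / D" "ginv22 X z = E / D"
    unfolding ginv11_def ginv12_def ginv22_def gdetz g11_def g12_def g22_def a_def b_def E_def Fm_def Gm_def by simp_all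
  have gradphi: "grad_inner_loc X (\<lambda>w. \<phi> (X w \<bullet> e3)) f z =
      (Gm * (c * (a \<bullet> e3)) * pf - Fm * ((c * (a \<bullet> e3)) * qf + (c * (b \<bullet> e3)) * pf) + E * (c * (b \<bullet> e3)) * qf) / D"
    unfolding grad_inner_loc_def ph1 ph2 ginv pf_def[symmetric] qf_def[symmetric] using Dpos by (simp add: field_simps)
  have gradf: "grad_inner_loc X f f z = (Gm * pf * pf - Fm * (pf * qf + qf * pf) + E * qf * qf) / D"
    unfolding grad_inner_loc_def ginv pf_def[symmetric] qf_def[symmetric] using Dpos by (simp add: field_simps)
  have T1: "D * (e3 \<bullet> Xz) = (e3 \<bullet> a) * (Gm * (a \<bullet> Xz) - Fm * (b \<bullet> Xz)) + (e3 \<bullet> b) * (E * (b \<bullet> Xz) - Fm * (a \<bullet> Xz))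
      + (e3 \<bullet> n) * (n \<bullet> Xz)"
    using tang[of a b e3 Xz] unfolding D_def E_def Fm_def Gm_def n_def by simp
  have T2: "D * (Xz \<bullet> Xz) = (Xz \<bullet> a) * (Gm * (a \<bullet> Xz) - Fm * (b \<bullet> Xz)) + (Xz \<bullet> b) * (E * (b \<bullet> Xz) - Fm * (a \<bullet> Xz))
      + (Xz \<bullet> n) * (n \<bullet> Xz)"
    using tang[of a b Xz Xz] unfolding D_def E_def Fm_def Gm_def n_def by simp
  define xa where "xa = Xz \<bullet> a"
  define xb where "xb = Xz \<bullet> b"
  define ea where "ea = a \<bullet> e3"
  define eb where "eb = b \<bullet> e3"
  define xn where "xn = Xz \<bullet> n"
  define en where "en = n \<bullet> e3"
  define xe where "xe = Xz \<bullet> e3"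
  define xx where "xx = Xz \<bullet> Xz"
  have c1: "e3 \<bullet> Xz = xe" "e3 \<bullet> a = ea" "a \<bullet> Xz = xa" "b \<bullet> Xz = xb" "e3 \<bullet> b = eb" "e3 \<bullet> n = en" "n \<bullet> Xz = xn"
    "Xz \<bullet> Xz = xx" "Xz \<bullet> a = xa" "Xz \<bullet> b = xb" "Xz \<bullet> n = xn"
    unfolding xa_def xb_def ea_def eb_def xn_def en_def xe_def xx_def by (simp_all add: inner_commute)
  have T1s: "D * xe = ea * (Gm * xa - Fm * xb) + eb * (E * xb - Fm * xa) + en * xn"
    using T1 unfolding c1 .
  have T2s: "D * xx = xa * (Gm * xa - Fm * xb) + xb * (E * xb - Fm * xa) + xn * xn"
    using T2 unfolding c1 .
  have T1': "Gm*ea*xa - Fm*(ea*xb + eb*xa) + E*eb*xb = D*xe - en*xn"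
    using T1s by (simp add: algebra_simps)
  have T2': "Gm*xa*xa - 2*Fm*xa*xb + E*xb*xb = D*xx - xn*xn"
    using T2s by (simp add: algebra_simps)
  have k1s: "\<Psi>1 (1 + X z \<bullet> X z) = k1" unfolding k1_def \<sigma>_def Xz_def ..
  have k1s': "\<Psi>1 (1 + xx) = k1" unfolding k1_def \<sigma>_def xx_def ..
  have Xe: "X z \<bullet> e3 = xe" "X z \<bullet> X z = xx" unfolding xe_def xx_def Xz_def by simp_all
  have gf: "grad_inner_loc X f f z = 4 * \<epsilon>^2 * k1^2 * (Gm*xa*xa - 2*Fm*xa*xb + E*xb*xb) / D"
    unfolding gradf pf qf xa_def[symmetric] xb_def[symmetric] by (simp add: algebra_simps power2_eq_square)
  also have "\<dots> = 4 * \<epsilon>^2 * k1^2 * (xx - xn*xn/D)"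
    unfolding T2' using Dpos by (simp add: field_simps)
  also have "\<dots> \<le> 4 * \<epsilon>^2 * k1^2 * xx"
  proof -
    have "xn*xn/D \<ge> 0" using Dpos by simp
    thus ?thesis by (intro mult_left_mono) auto
  qed
  finally have "grad_inner_loc X f f z \<le> 4 * \<epsilon>^2 * k1^2 * xx" .
  thus "grad_inner_loc X f f z \<le> \<epsilon>^2 * (\<Psi>1 (1 + X z \<bullet> X z))^2 * (4 * (X z \<bullet> X z))"
    unfolding Xe using k1s' by (simp add: algebra_simps)
  have gp: "grad_inner_loc X (\<lambda>w. \<phi> (X w \<bullet> e3)) f z = 2 * \<epsilon> * k1 * c * (D*xe - en*xn) / D"
    unfolding gradphi pf qf T1'[symmetric] xa_def[symmetric] xb_def[symmetric] ea_def[symmetric] eb_def[symmetric]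
    by (simp add: algebra_simps)
  have lp: "lap_loc X f z = LAPV a b a1 b1 b1 b2 (pf - \<epsilon> * P1 z) (qf - \<epsilon> * P2 z) m11 m21 m12 m22
      + \<epsilon> * (k2 * Q / D + k1 * (4 + 2 * (c * en * xn / D)))"
    unfolding lapf split Ppart XH en_def[symmetric] xn_def[symmetric] ..
  have "lap_loc X f z + grad_inner_loc X (\<lambda>w. \<phi> (X w \<bullet> e3)) f z
      = LAPV a b a1 b1 b1 b2 (pf - \<epsilon> * P1 z) (qf - \<epsilon> * P2 z) m11 m21 m12 m22 + \<epsilon> * (k2 * Q / D)
        + \<epsilon> * k1 * (4 + 2 * c * xe)"
    unfolding lp gp using Dpos by (simp add: field_simps)
  also have "\<dots> \<le> \<epsilon> * k1 * (4 + 2 * c * xe)"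
  proof -
    have "k2 * Q / D \<le> 0" using neg Qnn Dpos unfolding k2_def \<sigma>_def Xz_def
      by (simp add: divide_nonpos_pos mult_nonpos_nonneg)
    hence "\<epsilon> * (k2 * Q / D) \<le> 0" using eps by (intro mult_nonneg_nonpos) auto
    thus ?thesis using mpart by linarith
  qed
  finally show "lap_loc X f z + grad_inner_loc X (\<lambda>w. \<phi> (X w \<bullet> e3)) f z
           \<le> \<epsilon> * \<Psi>1 (1 + X z \<bullet> X z) * (4 + 2 * c * (X z \<bullet> e3))"
    unfolding Xe k1s' .
qed

lemma chart_at_props:
  assumes "oriented_immersed_surface F A"
  shows "chart_at A p \<in> A" "p \<in> fst (chart_at A p) ` snd (chart_at A p)"
proof -
  have "\<exists>c. c \<in> A \<and> p \<in> fst c ` snd c" using assms unfolding oriented_immersed_surface_def by fastforce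
  hence "chart_at A p \<in> A \<and> p \<in> fst (chart_at A p) ` snd (chart_at A p)"
    unfolding chart_at_def by (rule someI_ex)
  thus "chart_at A p \<in> A" "p \<in> fst (chart_at A p) ` snd (chart_at A p)" by auto
qed

lemma coord_at_props:
  assumes "oriented_immersed_surface F A"
  shows "coord_at A p \<in> snd (chart_at A p)" "fst (chart_at A p) (coord_at A p) = p"
  using chart_at_props(2)[OF assms, of p] unfolding coord_at_def
  by (auto intro: inv_into_into f_inv_into_f)

lemma chart_props:
  assumes "oriented_immersed_surface F A" "(\<psi>, U) \<in> A"
  shows "open U" "open (\<psi> ` U)" "\<exists>\<psi>'. homeomorphism U (\<psi> ` U) \<psi> \<psi>'" "Cinf U (F \<circ> \<psi>)"
    "\<forall>z\<in>U. cross3 (pd1 (F \<circ> \<psi>) z) (pd2 (F \<circ> \<psi>) z) \<noteq> 0"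
  using assms unfolding oriented_immersed_surface_def by fastforce+

lemma cont_from_charts:
  fixes g :: "'a::{t2_space,second_countable_topology} \<Rightarrow> 'b::topological_space"
  assumes surf: "oriented_immersed_surface F A"
    and cg: "\<And>\<psi> U. (\<psi>, U) \<in> A \<Longrightarrow> continuous_on U (g \<circ> \<psi>)"
  shows "continuous_on UNIV g"
proof (rule continuous_at_imp_continuous_on, rule ballI)
  fix p :: 'a
  obtain \<psi> U where c: "(\<psi>, U) \<in> A" "p \<in> \<psi> ` U"
    using chart_at_props[OF surf, of p] by (metis prod.collapse)
  obtain \<psi>' where h: "homeomorphism U (\<psi> ` U) \<psi> \<psi>'" using chart_props(3)[OF surf c(1)] by blast
  have op: "open (\<psi> ` U)" using chart_props(2)[OF surf c(1)] .
  have "continuous_on (\<psi> ` U) ((g \<circ> \<psi>) \<circ> \<psi>')"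
  proof (rule continuous_on_compose)
    show "continuous_on (\<psi> ` U) \<psi>'" using h by (simp add: homeomorphism_def)
    have "\<psi>' ` (\<psi> ` U) = U" using h by (simp add: homeomorphism_def)
    thus "continuous_on (\<psi>' ` (\<psi> ` U)) (g \<circ> \<psi>)" using cg[OF c(1)] by simp
  qed
  moreover have "\<And>y. y \<in> \<psi> ` U \<Longrightarrow> ((g \<circ> \<psi>) \<circ> \<psi>') y = g y"
    using h unfolding homeomorphism_def by (metis comp_apply)
  ultimately have "continuous_on (\<psi> ` U) g" by (rule continuous_on_eq)
  thus "isCont g p" using op c(2) by (auto simp: continuous_on_eq_continuous_at)
qed

lemma Ck2_cont: "Ck 2 U f \<Longrightarrow> continuous_on U f"
  by (simp add: numeral_2_eq_2)

lemma Cinf_Ck2: "Cinf U f \<Longrightarrow> Ck 2 U f"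
  unfolding Cinf_def by blast


lemma key:
  fixes \<phi> :: "real \<Rightarrow> real"
    and F :: "'a::{t2_space,second_countable_topology} \<Rightarrow> real^3"
    and A :: "((real \<times> real \<Rightarrow> 'a) \<times> (real \<times> real) set) set"
    and B :: real and G :: "real \<Rightarrow> real" and DG :: "nat \<Rightarrow> real \<Rightarrow> real"
    and u :: "'a \<Rightarrow> real"
  assumes phi_smooth: "smooth_real \<phi>"
    and surf: "oriented_immersed_surface F A"
    and proper: "\<forall>K. compact K \<longrightarrow> compact (F -` K)"
    and minimal: "phi_minimal \<phi> F A"
    and B_pos: "B > 0"
    and G_smooth: "smooth_on_halfline G DG"
    and G0: "G 0 > 0"
    and G_mono: "\<forall>t\<ge>0. DG 1 t \<ge> 0"
    and G_nonint: "\<not> set_integrable lborel {0::real..} (\<lambda>t. 1 / sqrt (G t))"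
    and bound: "\<exists>K. compact K \<and>
       (\<forall>p. p \<notin> K \<longrightarrow> \<bar>deriv \<phi> (height F p)\<bar> \<le> B * sqrt (G (norm (F p))))"
    and Cu: "C2_surface A u" and bdd: "bdd_above (range u)"
    and eta: "\<eta> > 0"
  shows "\<exists>q. u q > (SUP q. u q) - \<eta> \<and> grad_norm F A u q < \<eta> \<and> phi_laplacian \<phi> F A u q < \<eta>"
proof -
  interpret Gfun G DG using G_smooth G0 G_mono by unfold_locales auto
  have Fc: "continuous_on UNIV F"
    by (rule cont_from_charts[OF surf]) (rule Ck2_cont, rule Cinf_Ck2, rule chart_props(4)[OF surf])
  have uc: "continuous_on UNIV u"
    by (rule cont_from_charts[OF surf]) (rule Ck2_cont, use Cu in \<open>auto simp: C2_surface_def\<close>)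
  have Psic: "continuous_on {0<..} Psi"
    using DERIV_isCont[OF Psi_d1] by (intro continuous_at_imp_continuous_on) auto
  define Th where "Th = (\<lambda>p. Psi (1 + F p \<bullet> F p))"
  have Thc: "continuous_on UNIV Th" unfolding Th_def
    by (rule continuous_on_compose2[OF Psic]) (auto intro!: continuous_intros Fc simp: add_pos_nonneg)
  have Thnn: "Th p \<ge> 0" for p unfolding Th_def by (rule Psi_nonneg) (simp add: add_nonneg_nonneg)
  have phid: "(\<phi> has_real_derivative deriv \<phi> t) (at t)" for t
  proof -
    have "((deriv ^^ 0) \<phi>) differentiable (at t)" using phi_smooth unfolding smooth_real_def by blast
    thus ?thesis by (simp add: DERIV_deriv_iff_real_differentiable)
  qed
  have dphic: "continuous_on UNIV (deriv \<phi>)"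
  proof -
    have "\<And>t. ((deriv ^^ 1) \<phi>) differentiable (at t)" using phi_smooth unfolding smooth_real_def by blast
    hence "\<And>t. isCont (deriv \<phi>) t" by (simp add: differentiable_imp_continuous_within)
    thus ?thesis by (simp add: continuous_at_imp_continuous_on)
  qed
  have hc: "continuous_on UNIV (\<lambda>p. deriv \<phi> (height F p))"
    unfolding height_def by (rule continuous_on_compose2[OF dphic]) (auto intro!: continuous_intros Fc)
  obtain K where K: "compact K" "\<forall>p. p \<notin> K \<longrightarrow> \<bar>deriv \<phi> (height F p)\<bar> \<le> B * sqrt (G (norm (F p)))"
    using bound by blast
  obtain M where M: "\<forall>p\<in>K. \<bar>deriv \<phi> (height F p)\<bar> \<le> M"
  proof -
    have "compact ((\<lambda>p. deriv \<phi> (height F p)) ` K)"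
      by (rule compact_continuous_image[OF continuous_on_subset[OF hc] K(1)]) simp
    then obtain M where "\<forall>x\<in>(\<lambda>p. deriv \<phi> (height F p)) ` K. norm x \<le> M"
      using compact_imp_bounded bounded_iff by blast
    thus ?thesis using that by auto
  qed
  define M' where "M' = max B (M / sqrt (G 0))"
  have M'pos: "M' > 0" using B_pos unfolding M'_def by simp
  have Mbound: "\<bar>deriv \<phi> (height F p)\<bar> \<le> M' * sqrt (G (norm (F p)))" for p
  proof (cases "p \<in> K")
    case True
    have g: "sqrt (G (norm (F p))) \<ge> sqrt (G 0)" using G_pos(1)[of "norm (F p)"] by simp
    have "\<bar>deriv \<phi> (height F p)\<bar> \<le> M" using M True by blast
    also have "M \<le> (M / sqrt (G 0)) * sqrt (G 0)" using G0 by simp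
    also have "\<dots> \<le> M' * sqrt (G 0)" unfolding M'_def using G0 by (intro mult_right_mono) auto
    also have "\<dots> \<le> M' * sqrt (G (norm (F p)))" using g M'pos by (intro mult_left_mono) auto
    finally show ?thesis .
  next
    case False
    hence "\<bar>deriv \<phi> (height F p)\<bar> \<le> B * sqrt (G (norm (F p)))" using K by blast
    also have "\<dots> \<le> M' * sqrt (G (norm (F p)))" unfolding M'_def
      using G_pos(2)[of "norm (F p)"] by (intro mult_right_mono) auto
    finally show ?thesis .
  qed
  define S where "S = (SUP q. u q)"
  have uS: "u p \<le> S" for p unfolding S_def using bdd by (intro cSUP_upper) auto
  obtain p0 where p0: "u p0 > S - \<eta>/2"
  proof -
    have "S - \<eta>/2 < S" using eta by simp
    hence "\<exists>x\<in>UNIV. S - \<eta>/2 < u x" unfolding S_def using less_cSUP_iff[of UNIV u] bdd by auto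
    thus ?thesis using that by blast
  qed
  define Cg where "Cg = 1 / sqrt (G 0)"
  define Cl where "Cl = 2 / sqrt (G 0) + M'"
  have Cg: "Cg > 0" unfolding Cg_def using G0 by simp
  have Cl: "Cl > 0" unfolding Cl_def using G0 M'pos by (simp add: add_pos_pos)
  define \<epsilon> where "\<epsilon> = \<eta> / (2 * (Th p0 + 1 + Cg + Cl))"
  have den: "Th p0 + 1 + Cg + Cl > 0" using Thnn[of p0] Cg Cl by linarith
  have eps: "\<epsilon> > 0" unfolding \<epsilon>_def using eta den by simp
  have epsTh: "\<epsilon> * Th p0 < \<eta>/2"
  proof -
    have "\<epsilon> * Th p0 = \<eta>/2 * (Th p0 / (Th p0 + 1 + Cg + Cl))" unfolding \<epsilon>_def using den by (simp add: field_simps)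
    also have "\<dots> < \<eta>/2 * 1" using eta den Thnn[of p0] Cg Cl by (intro mult_strict_left_mono) (auto simp: divide_less_eq)
    finally show ?thesis by simp
  qed
  have epsCg: "\<epsilon> * Cg < \<eta>"
  proof -
    have "\<epsilon> * Cg = \<eta>/2 * (Cg / (Th p0 + 1 + Cg + Cl))" unfolding \<epsilon>_def using den by (simp add: field_simps)
    also have "\<dots> < \<eta>/2 * 1" using eta den Thnn[of p0] Cg Cl by (intro mult_strict_left_mono) (auto simp: divide_less_eq)
    finally show ?thesis using eta by simp
  qed
  have epsCl: "\<epsilon> * Cl < \<eta>"
  proof -
    have "\<epsilon> * Cl = \<eta>/2 * (Cl / (Th p0 + 1 + Cg + Cl))" unfolding \<epsilon>_def using den by (simp add: field_simps)
    also have "\<dots> < \<eta>/2 * 1" using eta den Thnn[of p0] Cg Cl by (intro mult_strict_left_mono) (auto simp: divide_less_eq)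
    finally show ?thesis using eta by simp
  qed
  define w where "w = (\<lambda>p. u p - \<epsilon> * Th p)"
  have wc: "continuous_on UNIV w" unfolding w_def by (intro continuous_intros uc Thc)
  define L where "L = {p. w p0 \<le> w p}"
  define T where "T = (S - w p0) / \<epsilon>"
  obtain \<sigma>1 where \<sigma>1: "\<sigma>1 \<ge> 1" "Psi \<sigma>1 > T" using Psi_unbounded[OF G_nonint] by blast
  have Lsub: "L \<subseteq> F -` cball 0 (sqrt \<sigma>1)"
  proof
    fix p assume "p \<in> L"
    hence "w p0 \<le> u p - \<epsilon> * Th p" unfolding L_def w_def by simp
    hence "\<epsilon> * Th p \<le> S - w p0" using uS[of p] by linarith
    hence ThT: "Th p \<le> T" unfolding T_def using eps by (simp add: field_simps)
    have "1 + F p \<bullet> F p < \<sigma>1"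
    proof (rule ccontr)
      assume "\<not> ?thesis"
      hence "Psi \<sigma>1 \<le> Th p" unfolding Th_def using \<sigma>1 by (intro Psi_mono) auto
      thus False using ThT \<sigma>1 by linarith
    qed
    hence "norm (F p) ^ 2 \<le> \<sigma>1" by (simp add: power2_norm_eq_inner)
    hence "norm (F p) \<le> sqrt \<sigma>1" by (simp add: real_le_rsqrt)
    thus "p \<in> F -` cball 0 (sqrt \<sigma>1)" by simp
  qed
  have Lcomp: "compact L"
  proof -
    have "closed L" unfolding L_def by (rule closed_Collect_le[OF continuous_on_const wc])
    moreover have "compact (F -` cball 0 (sqrt \<sigma>1))" using proper by simp
    ultimately have "compact (F -` cball 0 (sqrt \<sigma>1) \<inter> L)" by (intro compact_Int_closed)
    thus ?thesis using Lsub by (simp add: Int_absorb1)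
  qed
  obtain q where q: "q \<in> L" "\<forall>y\<in>L. w y \<le> w q"
    using continuous_attains_sup[OF Lcomp _ continuous_on_subset[OF wc]] unfolding L_def by auto
  have qmax: "w p \<le> w q" for p
  proof (cases "p \<in> L")
    case False thus ?thesis using q unfolding L_def by auto
  qed (use q in auto)
  define \<psi> where "\<psi> = fst (chart_at A q)"
  define U where "U = snd (chart_at A q)"
  define z where "z = coord_at A q"
  have cA: "(\<psi>, U) \<in> A" using chart_at_props(1)[OF surf, of q] unfolding \<psi>_def U_def by simp
  have zU: "z \<in> U" using coord_at_props(1)[OF surf, of q] unfolding z_def U_def .
  have \<psi>z: "\<psi> z = q" using coord_at_props(2)[OF surf, of q] unfolding z_def \<psi>_def .
  define X where "X = F \<circ> \<psi>"
  define f where "f = u \<circ> \<psi>"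
  define c where "c = deriv \<phi> (X z \<bullet> e3)"
  have Xz: "X z = F q" unfolding X_def using \<psi>z by simp
  have mc: "meancurv_loc X z = (c * (normal_loc X z \<bullet> e3)) *\<^sub>R normal_loc X z"
  proof -
    have "mean_curvature_vector F A q = (deriv \<phi> (height F q) * (unit_normal F A q \<bullet> e3)) *\<^sub>R unit_normal F A q"
      using minimal unfolding phi_minimal_def by blast
    moreover have "mean_curvature_vector F A q = meancurv_loc X z"
      unfolding mean_curvature_vector_def X_def \<psi>_def z_def ..
    moreover have "unit_normal F A q = normal_loc X z"
      unfolding unit_normal_def X_def \<psi>_def z_def ..
    moreover have "height F q = X z \<bullet> e3" unfolding height_def Xz ..
    ultimately show ?thesis unfolding c_def by simp
  qed
  have mx: "\<forall>v\<in>U. f v - \<epsilon> * Psi (1 + X v \<bullet> X v) \<le> f z - \<epsilon> * Psi (1 + X z \<bullet> X z)"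
  proof
    fix v assume "v \<in> U"
    have "w (\<psi> v) \<le> w q" by (rule qmax)
    thus "f v - \<epsilon> * Psi (1 + X v \<bullet> X v) \<le> f z - \<epsilon> * Psi (1 + X z \<bullet> X z)"
      unfolding w_def Th_def f_def X_def using \<psi>z by simp
  qed
  have \<sigma>pos: "1 + X z \<bullet> X z > 0" by (simp add: add_pos_nonneg)
  have Cf: "Ck 2 U f" using Cu cA unfolding C2_surface_def f_def by auto
  note LM = local_main[OF chart_props(1)[OF surf cA] zU Cinf_Ck2[OF chart_props(4)[OF surf cA], folded X_def]
      chart_props(5)[OF surf cA, rule_format, OF zU, folded X_def]
      Cf Psi_d1 Psi_d2 Psi2_cont Psi2_nonpos[OF \<sigma>pos] eps mx mc phid[of "X z \<bullet> e3", folded c_def]]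
  have LM1: "grad_inner_loc X f f z \<le> \<epsilon>^2 * (Psi1 (1 + X z \<bullet> X z))^2 * (4 * (X z \<bullet> X z))"
    by (rule LM(1))
  have LM2: "lap_loc X f z + grad_inner_loc X (\<lambda>w. \<phi> (X w \<bullet> e3)) f z
           \<le> \<epsilon> * Psi1 (1 + X z \<bullet> X z) * (4 + 2 * c * (X z \<bullet> e3))"
    by (rule LM(2))
  have gn: "grad_norm F A u q = sqrt (grad_inner_loc X f f z)"
    unfolding grad_norm_def grad_inner_def X_def f_def \<psi>_def z_def by (rule refl)
  have pl: "phi_laplacian \<phi> F A u q = lap_loc X f z + grad_inner_loc X (\<lambda>w. \<phi> (X w \<bullet> e3)) f z"
  proof -
    have e: "(\<phi> \<circ> height F) \<circ> \<psi> = (\<lambda>w. \<phi> (X w \<bullet> e3))" unfolding X_def height_def by (simp add: o_def)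
    have "phi_laplacian \<phi> F A u q = lap_loc (F \<circ> \<psi>) (u \<circ> \<psi>) z + grad_inner_loc (F \<circ> \<psi>) ((\<phi> \<circ> height F) \<circ> \<psi>) (u \<circ> \<psi>) z"
      unfolding phi_laplacian_def laplacian_def grad_inner_def \<psi>_def z_def by (rule refl)
    thus ?thesis unfolding e X_def f_def .
  qed
  define \<sigma> where "\<sigma> = 1 + X z \<bullet> X z"
  define k1 where "k1 = Psi1 \<sigma>"
  have \<sigma>1: "\<sigma> \<ge> 1" unfolding \<sigma>_def by simp
  have sq1: "sqrt \<sigma> \<ge> 1" using \<sigma>1 by simp
  have k1pos: "k1 > 0" unfolding k1_def using Psi1_pos \<sigma>1 by simp
  have nX: "norm (X z) \<le> sqrt \<sigma>" unfolding \<sigma>_def by (simp add: norm_eq_sqrt_inner)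
  have Gs: "G (sqrt \<sigma>) \<ge> G 0" "G (sqrt \<sigma>) > 0" using G_pos[of "sqrt \<sigma>"] sq1 by auto
  have ggs: "gg (sqrt \<sigma>) \<le> Cg" unfolding gg_def Cg_def using Gs G0 by (simp add: frac_le)
  have ggpos: "gg (sqrt \<sigma>) > 0" using gg_pos sq1 by simp
  have "grad_inner_loc X f f z \<le> \<epsilon>^2 * k1^2 * (4 * \<sigma>)"
  proof -
    have "4 * (X z \<bullet> X z) \<le> 4 * \<sigma>" unfolding \<sigma>_def by simp
    hence "\<epsilon>^2 * k1^2 * (4 * (X z \<bullet> X z)) \<le> \<epsilon>^2 * k1^2 * (4 * \<sigma>)" by (intro mult_left_mono) auto
    thus ?thesis using LM1 unfolding k1_def \<sigma>_def by linarith
  qed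
  also have "\<dots> = \<epsilon>^2 * (1 / G (sqrt \<sigma>))" using Psi1_grad[of \<sigma>] \<sigma>1 unfolding k1_def by (simp add: algebra_simps)
  also have "\<dots> \<le> \<epsilon>^2 * (1 / G 0)" using Gs G0 by (intro mult_left_mono) (auto simp: frac_le)
  also have "\<dots> = (\<epsilon> * Cg)^2" unfolding Cg_def using G0 by (simp add: power2_eq_square field_simps)
  finally have "sqrt (grad_inner_loc X f f z) \<le> sqrt ((\<epsilon> * Cg)^2)" by (rule real_sqrt_le_mono)
  also have "\<dots> = \<epsilon> * Cg" using eps Cg by simp
  finally have GN: "grad_norm F A u q < \<eta>" unfolding gn using epsCg by linarith
  have cb: "\<bar>c\<bar> \<le> M' * sqrt (G (norm (X z)))"
    using Mbound[of q] unfolding c_def height_def Xz .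
  have xe: "\<bar>X z \<bullet> e3\<bar> \<le> sqrt \<sigma>"
  proof -
    have "\<bar>X z \<bullet> e3\<bar> \<le> norm (X z) * norm e3" by (rule Cauchy_Schwarz_ineq2)
    also have "norm e3 = 1" unfolding e3_def by simp
    finally show ?thesis using nX by simp
  qed
  have "k1 * (4 + 2 * c * (X z \<bullet> e3)) \<le> 4 * k1 + \<bar>c\<bar> * (k1 * (2 * sqrt \<sigma>))"
  proof -
    have "c * (X z \<bullet> e3) \<le> \<bar>c\<bar> * sqrt \<sigma>"
      using xe by (metis abs_ge_self abs_mult abs_mult_pos abs_of_nonneg mult_left_mono abs_ge_zero order_trans)
    hence "k1 * (2 * (c * (X z \<bullet> e3))) \<le> k1 * (2 * (\<bar>c\<bar> * sqrt \<sigma>))" using k1pos by (intro mult_left_mono) auto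
    thus ?thesis by (simp add: algebra_simps)
  qed
  also have "\<bar>c\<bar> * (k1 * (2 * sqrt \<sigma>)) = \<bar>c\<bar> * gg (sqrt \<sigma>)"
    using Psi1_gg[of \<sigma>] \<sigma>1 unfolding k1_def by simp
  also have "\<bar>c\<bar> * gg (sqrt \<sigma>) \<le> M'"
  proof -
    have "G (norm (X z)) \<le> G (sqrt \<sigma>)" using G_incr nX by simp
    hence "sqrt (G (norm (X z))) \<le> sqrt (G (sqrt \<sigma>))" by simp
    hence "\<bar>c\<bar> \<le> M' * sqrt (G (sqrt \<sigma>))" using cb M'pos by (meson mult_left_mono less_imp_le order_trans)
    hence "\<bar>c\<bar> * gg (sqrt \<sigma>) \<le> M' * sqrt (G (sqrt \<sigma>)) * gg (sqrt \<sigma>)" using ggpos by (intro mult_right_mono) auto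
    also have "\<dots> = M'" unfolding gg_def using Gs by simp
    finally show ?thesis .
  qed
  also have "4 * k1 \<le> 2 * Cg"
  proof -
    have "4 * k1 = 2 * gg (sqrt \<sigma>) / sqrt \<sigma>" unfolding k1_def Psi1_def by simp
    also have "\<dots> \<le> 2 * gg (sqrt \<sigma>)" using sq1 ggpos by (simp add: divide_le_eq mult_le_cancel_left1)
    finally show ?thesis using ggs by linarith
  qed
  hence "4 * k1 + M' \<le> Cl" unfolding Cl_def Cg_def by simp
  finally have kb: "k1 * (4 + 2 * c * (X z \<bullet> e3)) \<le> Cl" by linarith
  have "phi_laplacian \<phi> F A u q \<le> \<epsilon> * (k1 * (4 + 2 * c * (X z \<bullet> e3)))"
    using LM2 unfolding pl k1_def \<sigma>_def by (simp add: mult.assoc)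
  also have "\<dots> \<le> \<epsilon> * Cl" using kb eps by (intro mult_left_mono) auto
  finally have PL: "phi_laplacian \<phi> F A u q < \<eta>" using epsCl by linarith
  have "w p0 \<le> w q" by (rule qmax)
  hence "u q \<ge> u p0 - \<epsilon> * Th p0 + \<epsilon> * Th q" unfolding w_def by simp
  moreover have "\<epsilon> * Th q \<ge> 0" using eps Thnn[of q] by simp
  ultimately have "u q > S - \<eta>" using p0 epsTh by linarith
  thus ?thesis using GN PL unfolding S_def by blast
qed

theorem corollary2p7:
  fixes \<phi> :: "real \<Rightarrow> real"
    and F :: "'a::{t2_space,second_countable_topology} \<Rightarrow> real^3"
    and A :: "((real \<times> real \<Rightarrow> 'a) \<times> (real \<times> real) set) set"
    and B :: real
    and G :: "real \<Rightarrow> real"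
    and DG :: "nat \<Rightarrow> real \<Rightarrow> real"
  assumes phi_smooth: "smooth_real \<phi>"
    and surf: "oriented_immersed_surface F A"
    and conn: "connected (UNIV :: 'a set)"
    and proper: "\<forall>K. compact K \<longrightarrow> compact (F -` K)"
    and minimal: "phi_minimal \<phi> F A"
    and B_pos: "B > 0"
    and G_smooth: "smooth_on_halfline G DG"
    and G0: "G 0 > 0"
    and G_mono: "\<forall>t\<ge>0. DG 1 t \<ge> 0"
    and G_nonint: "\<not> set_integrable lborel {0::real..} (\<lambda>t. 1 / sqrt (G t))"
    and G_limsup: "Limsup at_top (\<lambda>t. ereal (t * G (sqrt t) / G t)) < \<infinity>"
    and bound: "\<exists>K. compact K \<and>
       (\<forall>p. p \<notin> K \<longrightarrow> \<bar>deriv \<phi> (height F p)\<bar> \<le> B * sqrt (G (norm (F p))))"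
  shows "omori_yau_phi \<phi> F A \<and> phi_stochastically_complete \<phi> F A"
proof -
  have K: "\<exists>q. u q > (SUP q. u q) - \<eta> \<and> grad_norm F A u q < \<eta> \<and> phi_laplacian \<phi> F A u q < \<eta>"
    if "C2_surface A u" "bdd_above (range u)" "\<eta> > 0" for u :: "'a \<Rightarrow> real" and \<eta> :: real
    by (rule key[OF phi_smooth surf proper minimal B_pos G_smooth G0 G_mono G_nonint bound that])
  have OY: "omori_yau_phi \<phi> F A"
    unfolding omori_yau_phi_def
  proof (intro allI impI)
    fix u :: "'a \<Rightarrow> real" assume u: "C2_surface A u \<and> bdd_above (range u)"
    define p where "p = (\<lambda>n::nat. SOME q. u q > (SUP q. u q) - 1 / real n \<and> grad_norm F A u q < 1 / real n
        \<and> phi_laplacian \<phi> F A u q < 1 / real n)"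
    show "\<exists>p :: nat \<Rightarrow> 'a. \<forall>n::nat. n \<ge> 1 \<longrightarrow>
            u (p n) > (SUP q. u q) - 1 / real n \<and>
            grad_norm F A u (p n) < 1 / real n \<and>
            phi_laplacian \<phi> F A u (p n) < 1 / real n"
    proof (intro exI allI impI)
      fix n :: nat assume "n \<ge> 1"
      hence "1 / real n > 0" by simp
      hence "\<exists>q. u q > (SUP q. u q) - 1 / real n \<and> grad_norm F A u q < 1 / real n
        \<and> phi_laplacian \<phi> F A u q < 1 / real n" using K u by blast
      thus "u (p n) > (SUP q. u q) - 1 / real n \<and> grad_norm F A u (p n) < 1 / real n \<and>
            phi_laplacian \<phi> F A u (p n) < 1 / real n"
        unfolding p_def by (rule someI_ex)
    qed
  qed
  moreover have "phi_stochastically_complete \<phi> F A"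
    using OY unfolding omori_yau_phi_def phi_stochastically_complete_def by blast
  ultimately show ?thesis ..
qed

end
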